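(* The graph $H_q$ is $d$-regular on $N$ vertices, where $N = q^4-q^3+q^2$ and $d=(q+1)(q^2-1)$. Moreover: (a) the family $\mathscr{C}_q$ consists of $q^3+1$ cliques of order $q^2$, each maximal, and every two of them share exactly one vertex; (b) each vertex of $H_q$ lies in exactly $q+1$ cliques of $\mathscr{C}_q$ and each edge of $H_q$ lies in exactly one clique of $\mathscr{C}_q$; (c) every copy of $K_4$ in $H_q$ has at least three of its vertices in a common clique of $\mathscr{C}_q$; (d) $H_q$ is strongly regular: any two adjacent vertices have exactly $2q^2-2$ common neighbours and any two non-adjacent vertices have exactly $(q+1)^2$ common neighbours.
   Context: Let $q$ be a prime power and $PG(2,q^2)$ the projective plane over $\mathbb{F}_{q^2}$. The Hermitian unital is $\mathscr{U}_q = \{\langle X,Y,Z\rangle : X^{q+1}+Y^{q+1}+Z^{q+1}=0\}$, a set of points of $PG(2,q^2)$. Every line of $PG(2,q^2)$ meets $\mathscr{U}_q$ in exactly $1$ or exactly $q+1$ points; lines meeting it in $q+1$ points are called secants, and $\mathscr{L}_q$ denotes the set of secants. The graph $H_q$ has vertex set $\{v_\ell : \ell \in \mathscr{L}_q\}$, with $v_{\ell_1} \sim v_{\ell_2}$ iff $\ell_1 \neq \ell_2$ and $\ell_1 \cap \ell_2 \in \mathscr{U}_q$. For each point $p \in \mathscr{U}_q$, let $C_p = \{v_\ell : p \in \ell \in \mathscr{L}_q\}$, and $\mathscr{C}_q = \{C_p : p \in \mathscr{U}_q\}$. *)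

theory Defs
  imports "HOL-Computational_Algebra.Primes"
begin

type_synonym 'a vec3 = "'a \<times> 'a \<times> 'a"

definition scale3 :: "'a::field \<Rightarrow> 'a vec3 \<Rightarrow> 'a vec3" where
  "scale3 c v = (case v of (x, y, z) \<Rightarrow> (c * x, c * y, c * z))"

definition dot3 :: "'a::field vec3 \<Rightarrow> 'a vec3 \<Rightarrow> 'a" where
  "dot3 u v = (case u of (a, b, c) \<Rightarrow> case v of (x, y, z) \<Rightarrow> a * x + b * y + c * z)"

definition proj_point :: "'a::field vec3 \<Rightarrow> 'a vec3 set" where
  "proj_point v = {scale3 c v | c. c \<noteq> 0}"

definition PG_points :: "'a::field vec3 set set" where
  "PG_points = {proj_point v | v. v \<noteq> (0, 0, 0)}"

definition proj_line :: "'a::field vec3 \<Rightarrow> 'a vec3 set set" where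
  "proj_line w = {proj_point v | v. v \<noteq> (0, 0, 0) \<and> dot3 w v = 0}"

definition PG_lines :: "'a::field vec3 set set set" where
  "PG_lines = {proj_line w | w. w \<noteq> (0, 0, 0)}"

text \<open>The Hermitian unital (q is the square root of the field order).\<close>
definition hermitian_unital :: "nat \<Rightarrow> 'a::field vec3 set set" where
  "hermitian_unital q = {proj_point (x, y, z) | x y z.
      (x, y, z) \<noteq> (0, 0, 0) \<and> x ^ (q + 1) + y ^ (q + 1) + z ^ (q + 1) = 0}"

definition secants :: "nat \<Rightarrow> 'a::field vec3 set set set" where
  "secants q = {l \<in> PG_lines. card (l \<inter> hermitian_unital q) = q + 1}"

text \<open>The graph H_q: vertices are the secants (v_l identified with l), adjacency
  iff distinct and their intersection point lies on the unital.\<close>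
definition H_adj :: "nat \<Rightarrow> 'a::field vec3 set set \<Rightarrow> 'a vec3 set set \<Rightarrow> bool" where
  "H_adj q l1 l2 \<longleftrightarrow> l1 \<in> secants q \<and> l2 \<in> secants q \<and> l1 \<noteq> l2 \<and>
      (\<exists>p \<in> hermitian_unital q. p \<in> l1 \<and> p \<in> l2)"

definition clique_at :: "nat \<Rightarrow> 'a::field vec3 set \<Rightarrow> 'a vec3 set set set" where
  "clique_at q p = {l \<in> secants q. p \<in> l}"

definition clique_family :: "nat \<Rightarrow> 'a::field vec3 set set set set" where
  "clique_family q = {clique_at q p | p. p \<in> hermitian_unital q}"

definition is_clique :: "nat \<Rightarrow> 'a::field vec3 set set set \<Rightarrow> bool" where
  "is_clique q C \<longleftrightarrow> C \<subseteq> secants q \<and> (\<forall>u\<in>C. \<forall>v\<in>C. u \<noteq> v \<longrightarrow> H_adj q u v)"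

definition is_maximal_clique :: "nat \<Rightarrow> 'a::field vec3 set set set \<Rightarrow> bool" where
  "is_maximal_clique q C \<longleftrightarrow> is_clique q C \<and>
     (\<forall>v \<in> secants q - C. \<not> (\<forall>u\<in>C. H_adj q u v))"

definition common_nbrs :: "nat \<Rightarrow> 'a::field vec3 set set \<Rightarrow> 'a vec3 set set \<Rightarrow> 'a vec3 set set set" where
  "common_nbrs q u v = {w \<in> secants q. H_adj q u w \<and> H_adj q v w}"

end

theory Submission
  imports Defs "HOL-Computational_Algebra.Polynomial"
begin

lemma card_roots_trinom:
  fixes b c :: "'a::field"
  assumes "n \<ge> 2"
  shows "card {x. x^n + c*x + b = 0} \<le> n"
proof -
  define P where "P = monom (1::'a) n + [:b, c:]"
  have dP: "degree P = n"
  proof -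
    have "degree [:b, c:] \<le> 1" by (simp add: degree_pCons_le)
    then have "degree [:b, c:] < degree (monom (1::'a) n)" using assms by (simp add: degree_monom_eq)
    then show ?thesis unfolding P_def by (simp add: degree_add_eq_left degree_monom_eq)
  qed
  have "P \<noteq> 0" using dP assms by auto
  moreover have "{x. x^n + c*x + b = 0} = {x. poly P x = 0}"
    by (simp add: P_def poly_monom algebra_simps)
  ultimately show ?thesis using card_poly_roots_bound[of P] dP by simp
qed

locale hq =
  fixes q :: nat and sig :: "'a::{finite,field} \<Rightarrow> 'a"
  assumes pk: "\<exists>p k. prime p \<and> k \<ge> 1 \<and> q = p ^ k"
    and cardF: "card (UNIV :: 'a set) = q^2"
    and sig_def: "sig = (\<lambda>x. x ^ q)"
begin

lemma sig_pow: "sig x = x ^ q" using sig_def by simp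

lemma q2: "q \<ge> 2"
proof -
  obtain p k where pk: "prime p" "k \<ge> 1" "q = p^k" using pk by blast
  have "p \<ge> 2" using pk prime_ge_2_nat by blast
  moreover have "p \<le> p^k" using pk \<open>p \<ge> 2\<close> by (simp add: self_le_power)
  ultimately show ?thesis using pk by simp
qed

lemma pow_card: "(x::'a) ^ (q^2) = x"
proof (cases "x = 0")
  case True then show ?thesis using q2 by simp
next
  case False
  define S where "S = (UNIV::'a set) - {0}"
  have fS: "finite S" by simp
  have bij: "bij_betw (\<lambda>y. x * y) S S"
    unfolding S_def using False
    by (auto simp: bij_betw_def inj_on_def intro!: image_eqI[where x = "y / x" for y])
  have "prod id S = prod (\<lambda>y. x * y) S"
    using prod.reindex_bij_betw[OF bij, of id] by simp
  also have "\<dots> = x ^ card S * prod id S" by (simp add: prod.distrib)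
  finally have e: "x ^ card S * prod id S = 1 * prod id S" by simp
  have "prod id S \<noteq> 0" using fS by (simp add: S_def)
  then have "x ^ card S = 1" using e by simp
  moreover have "card S = q^2 - 1" using cardF by (simp add: S_def card_Diff_singleton)
  moreover have "q^2 \<ge> 1" using q2 by simp
  ultimately have "q^2 = Suc (card S)" "x ^ card S = 1" by simp_all
  then show ?thesis by (simp only: power_Suc) simp
qed

lemma char_p: obtains p k where "prime p" "k \<ge> 1" "q = p^k" "(of_nat p :: 'a) = 0"
proof -
  obtain p k where pk: "prime p" "k \<ge> 1" "q = p^k" using pk by blast
  have bij: "bij_betw (\<lambda>y. 1 + y) (UNIV::'a set) UNIV"
    by (auto simp: bij_betw_def inj_on_def intro!: image_eqI[where x = "y - 1" for y])
  have "sum id (UNIV::'a set) = sum (\<lambda>y. 1 + y) UNIV"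
    using sum.reindex_bij_betw[OF bij, of id] by simp
  also have "\<dots> = of_nat (card (UNIV :: 'a set)) + sum id UNIV" by (simp add: sum.distrib)
  finally have "(of_nat (card (UNIV :: 'a set)) :: 'a) = 0" by simp
  moreover have "card (UNIV :: 'a set) = p ^ (k * 2)" using cardF pk by (simp add: power_mult)
  ultimately have "(of_nat p :: 'a) ^ (k * 2) = 0" by (simp add: of_nat_power)
  then have "(of_nat p :: 'a) = 0" using pk by simp
  then show ?thesis using that pk by blast
qed

lemma frob_prime:
  assumes "prime p" "(of_nat p :: 'a) = 0"
  shows "((a::'a) + b) ^ p = a ^ p + b ^ p"
proof -
  have p0: "p \<noteq> 0" using assms prime_gt_0_nat by blast
  have "(a + b) ^ p = (\<Sum>k\<le>p. of_nat (p choose k) * a ^ k * b ^ (p - k))"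
    by (simp add: binomial_ring)
  also have "\<dots> = (\<Sum>k\<le>p. (if k = p then a ^ p else 0) + (if k = 0 then b ^ p else 0))"
  proof (rule sum.cong)
    fix k assume k: "k \<in> {..p}"
    show "of_nat (p choose k) * a ^ k * b ^ (p - k) = (if k = p then a ^ p else 0) + (if k = 0 then b ^ p else 0)"
    proof (cases "k = 0 \<or> k = p")
      case True then show ?thesis using p0 by auto
    next
      case False
      then have "p dvd (p choose k)" using k assms(1) p0 by (intro dvd_choose_prime) auto
      then obtain m where "p choose k = p * m" by blast
      then have "(of_nat (p choose k) :: 'a) = 0" using assms(2) by simp
      then show ?thesis using False by simp
    qed
  qed simp
  also have "\<dots> = a ^ p + b ^ p" by (simp add: sum.distrib)
  finally show ?thesis .
qed

lemma frob_pow: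
  assumes "prime p" "(of_nat p :: 'a) = 0"
  shows "((a::'a) + b) ^ (p ^ j) = a ^ (p ^ j) + b ^ (p ^ j)"
proof (induction j)
  case 0 then show ?case by simp
next
  case (Suc j)
  have pj: "p ^ Suc j = p ^ j * p" by simp
  have "(a + b) ^ (p ^ Suc j) = ((a + b) ^ (p ^ j)) ^ p" by (simp only: pj power_mult)
  also have "\<dots> = (a ^ (p ^ j) + b ^ (p ^ j)) ^ p" using Suc by simp
  also have "\<dots> = (a ^ (p ^ j)) ^ p + (b ^ (p ^ j)) ^ p" by (rule frob_prime[OF assms])
  also have "\<dots> = a ^ (p ^ Suc j) + b ^ (p ^ Suc j)" by (simp only: pj power_mult)
  finally show ?case .
qed

lemma sig_add: "sig (a + b) = sig a + sig b"
proof -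
  obtain p k where "prime p" "k \<ge> 1" "q = p^k" "(of_nat p :: 'a) = 0" by (rule char_p)
  then show ?thesis unfolding sig_def using frob_pow by simp
qed

lemma sig_mult: "sig (a * b) = sig a * sig b" unfolding sig_pow by (simp add: power_mult_distrib)
lemma sig_0[simp]: "sig 0 = 0" unfolding sig_pow using q2 by simp
lemma sig_1[simp]: "sig 1 = 1" unfolding sig_pow by simp
lemma sig_minus: "sig (- a) = - sig a"
  using sig_add[of a "-a"] by (simp add: eq_neg_iff_add_eq_0 add.commute)
lemma sig_diff: "sig (a - b) = sig a - sig b"
  using sig_add[of a "-b"] sig_minus[of b] by simp
lemma sig_sig[simp]: "sig (sig x) = x"
  unfolding sig_pow using pow_card[of x] by (simp add: power_mult[symmetric] power2_eq_square)
lemma sig_eq0[simp]: "sig x = 0 \<longleftrightarrow> x = 0" unfolding sig_pow using q2 by simp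
lemma sig_inj: "sig x = sig y \<Longrightarrow> x = y" by (metis sig_sig)
lemma sig_divide: "sig (a / b) = sig a / sig b" unfolding sig_pow by (simp add: power_divide)

definition Fq where "Fq = {x. sig x = x}"

lemma card_Fq: "card Fq \<le> q"
proof -
  have "Fq = {x. x^q + (-1)*x + 0 = 0}" unfolding Fq_def by (auto simp: sig_pow)
  then show ?thesis using card_roots_trinom[where n=q and b="0::'a" and c="-1"] q2 by simp
qed

definition tr where "tr x = x + sig x"
lemma tr_Fq: "tr x \<in> Fq" unfolding tr_def Fq_def by (simp add: sig_add add.commute)
lemma tr_add: "tr (x + y) = tr x + tr y" unfolding tr_def by (simp add: sig_add algebra_simps)

definition kr where "kr = {x. tr x = 0}"

lemma card_kr: "card kr = q"
proof -
  have le: "card kr \<le> q"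
  proof -
    have "kr = {x. x^q + 1*x + 0 = 0}" unfolding kr_def tr_def by (auto simp: add.commute sig_pow)
    then show ?thesis using card_roots_trinom[where n=q and b="0::'a" and c="1"] q2 by simp
  qed
  define I where "I = range tr"
  have UN: "(UNIV::'a set) = (\<Union>c\<in>I. {x. tr x = c})" unfolding I_def by auto
  have fib: "card {x. tr x = c} = card kr" if "c \<in> I" for c
  proof -
    from that obtain x0 where x0: "c = tr x0" unfolding I_def by blast
    have "{x. tr x = c} = (\<lambda>y. y + x0) ` kr"
    proof
      show "{x. tr x = c} \<subseteq> (\<lambda>y. y + x0) ` kr"
      proof
        fix x assume "x \<in> {x. tr x = c}"
        then have "tr (x - x0) = 0" using x0 tr_add[of "x - x0" x0] by simp
        then show "x \<in> (\<lambda>y. y + x0) ` kr" unfolding kr_def by (intro image_eqI[of _ _ "x - x0"]) auto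
      qed
      show "(\<lambda>y. y + x0) ` kr \<subseteq> {x. tr x = c}" using x0 by (auto simp: kr_def tr_add)
    qed
    moreover have "inj_on (\<lambda>y. y + x0) kr" by (auto simp: inj_on_def)
    ultimately show ?thesis by (simp add: card_image)
  qed
  have "q^2 = card (\<Union>c\<in>I. {x. tr x = c})" using UN cardF by simp
  also have "\<dots> = (\<Sum>c\<in>I. card {x. tr x = c})" by (rule card_UN_disjoint) auto
  also have "\<dots> = card I * card kr" using fib by simp
  finally have e: "card I * card kr = q * q" by (simp add: power2_eq_square)
  have "card I \<le> card Fq" using tr_Fq by (intro card_mono) (auto simp: I_def)
  then have I: "card I \<le> q" using card_Fq by simp
  show ?thesis
  proof (rule ccontr)
    assume "card kr \<noteq> q"
    then have "card kr < q" using le by simp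
    then have "card I * card kr < q * q"
      using I q2 by (metis mult_le_mono1 mult_less_cancel1 le_less_trans not_gr_zero le_0_eq less_nat_zero_code mult_0_right)
    then show False using e by simp
  qed
qed

definition nm where "nm x = x * sig x"
lemma nm_pow: "nm x = x ^ (q + 1)" unfolding nm_def sig_pow by simp
lemma nm_0[simp]: "nm 0 = 0" unfolding nm_def by simp
lemma nm_Fq: "nm x \<in> Fq" unfolding nm_def Fq_def by (simp add: sig_mult mult.commute)
lemma nm_mult: "nm (x * y) = nm x * nm y" unfolding nm_def by (simp add: sig_mult algebra_simps)
lemma nm_eq0[simp]: "nm x = 0 \<longleftrightarrow> x = 0" unfolding nm_def by simp

lemma card_nm_le: "card {x. nm x = c} \<le> q + 1"
proof -
  have eq: "{x. nm x = c} = {x. x^(q+1) + 0*x + (-c) = 0}" by (auto simp: nm_pow)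
  have "card {x::'a. x^(q+1) + 0*x + (-c) = 0} \<le> q + 1" by (rule card_roots_trinom) (use q2 in simp)
  then show ?thesis by (simp only: eq)
qed

lemma card_nm: assumes "c \<in> Fq" "c \<noteq> 0" shows "card {x. nm x = c} = q + 1"
proof -
  define I where "I = nm ` ((UNIV::'a set) - {0})"
  define f where "f c = card {x. nm x = c}" for c
  have IF: "I \<subseteq> Fq - {0}" using nm_Fq by (auto simp: I_def)
  have UN: "(UNIV::'a set) - {0} = (\<Union>c\<in>I. {x. nm x = c})" unfolding I_def by (auto simp: nm_def)
  have "q^2 - 1 = card ((UNIV::'a set) - {0})" using cardF by (simp add: card_Diff_singleton)
  also have "\<dots> = (\<Sum>c\<in>I. f c)" unfolding UN f_def by (rule card_UN_disjoint) auto
  finally have s: "(\<Sum>c\<in>I. f c) = q^2 - 1" by simp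
  have f_le: "\<forall>c\<in>I. f c \<le> q + 1" using card_nm_le by (simp add: f_def)
  have "card (Fq - {0}) \<le> q - 1"
  proof -
    have "0 \<in> Fq" by (simp add: Fq_def)
    then show ?thesis using card_Fq by (simp add: card_Diff_singleton)
  qed
  then have cI: "card I \<le> q - 1" using IF by (meson card_mono finite le_trans)
  have "(\<Sum>c\<in>I. f c) \<le> (\<Sum>c\<in>I. q + 1)" using f_le by (intro sum_mono) auto
  then have h1: "q^2 - 1 \<le> card I * (q + 1)" using s by simp
  have h2: "q^2 - 1 = (q - 1) * (q + 1)" using q2
    by (simp add: power2_eq_square algebra_simps diff_mult_distrib)
  have A: "(q - 1) * (q + 1) \<le> card I * (q + 1)" using h1 unfolding h2 .
  have "q - 1 \<le> card I" using A by (subst (asm) mult_le_cancel2) simp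
  then have cI': "card I = q - 1" using cI by simp
  have IE: "I = Fq - {0}"
    using IF cI' \<open>card (Fq - {0}) \<le> q - 1\<close> by (intro card_seteq) auto
  have "f c = q + 1"
  proof (rule ccontr)
    assume "f c \<noteq> q + 1"
    moreover have "c \<in> I" using IE assms by simp
    moreover have "f c \<le> q + 1" using f_le \<open>c \<in> I\<close> by blast
    ultimately have "f c < q + 1" by linarith
    then have "(\<Sum>c\<in>I. f c) < (\<Sum>c\<in>I. q + 1)"
      using f_le IE assms by (intro sum_strict_mono_ex1) auto
    then show False using s cI' h2 by simp
  qed
  then show ?thesis by (simp add: f_def)
qed

lemma card_nm0: "card {x. nm x = 0} = 1" by simp

end



lemma scale3_simp[simp]: "scale3 c (x, y, z) = (c * x, c * y, c * z)" by (simp add: scale3_def)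
lemma dot3_simp[simp]: "dot3 (a, b, c) (x, y, z) = a * x + b * y + c * z" by (simp add: dot3_def)

definition cross :: "'a::field vec3 \<Rightarrow> 'a vec3 \<Rightarrow> 'a vec3" where
  "cross u v = (case u of (a1, a2, a3) \<Rightarrow> case v of (b1, b2, b3) \<Rightarrow>
     (a2 * b3 - a3 * b2, a3 * b1 - a1 * b3, a1 * b2 - a2 * b1))"
lemma cross_simp[simp]: "cross (a1, a2, a3) (b1, b2, b3) = (a2 * b3 - a3 * b2, a3 * b1 - a1 * b3, a1 * b2 - a2 * b1)"
  by (simp add: cross_def)

definition add3 :: "'a::field vec3 \<Rightarrow> 'a vec3 \<Rightarrow> 'a vec3" where
  "add3 u v = (case u of (a1, a2, a3) \<Rightarrow> case v of (b1, b2, b3) \<Rightarrow> (a1 + b1, a2 + b2, a3 + b3))"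
lemma add3_simp[simp]: "add3 (a1, a2, a3) (b1, b2, b3) = (a1 + b1, a2 + b2, a3 + b3)"
  by (simp add: add3_def)

lemma scale3_0[simp]: "scale3 0 v = (0,0,0)" by (cases v) simp
lemma comb_div: fixes n :: "'a::field" shows "n \<noteq> 0 \<Longrightarrow> X * a + Y * b = n * v \<Longrightarrow> (X / n) * a + (Y / n) * b = v"
  by (simp add: field_simps)
lemma scale3_1[simp]: "scale3 1 v = v" by (cases v) simp
lemma scale3_scale3: "scale3 c (scale3 d v) = scale3 (c * d) v" by (cases v) (simp add: mult.assoc)
lemma scale3_eq0: "scale3 c v = (0,0,0) \<longleftrightarrow> c = 0 \<or> v = (0,0,0)" by (cases v) auto
lemma dot3_scale_r: "dot3 w (scale3 c v) = c * dot3 w v" by (cases v, cases w) (simp add: algebra_simps)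
lemma dot3_scale_l: "dot3 (scale3 c w) v = c * dot3 w v" by (cases v, cases w) (simp add: algebra_simps)
lemma dot3_add_r: "dot3 w (add3 u v) = dot3 w u + dot3 w v" by (cases u, cases v, cases w) (simp add: algebra_simps)
lemma cross_scale_l: "cross (scale3 c u) v = scale3 c (cross u v)" by (cases u, cases v) (simp add: algebra_simps)
lemma cross_scale_r: "cross u (scale3 c v) = scale3 c (cross u v)" by (cases u, cases v) (simp add: algebra_simps)
lemma cross_self: "cross u u = (0,0,0)" by (cases u) (simp add: algebra_simps)
lemma cross_swap: "cross v u = scale3 (-1) (cross u v)" by (cases u, cases v) (simp add: algebra_simps)

lemma cross_zero:
  fixes w v :: "'a::field vec3"
  assumes "v \<noteq> (0,0,0)" "cross w v = (0,0,0)"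
  shows "\<exists>c. w = scale3 c v"
proof -
  obtain w1 w2 w3 where w: "w = (w1, w2, w3)" by (cases w)
  obtain v1 v2 v3 where v: "v = (v1, v2, v3)" by (cases v)
  have e: "w2 * v3 = w3 * v2" "w3 * v1 = w1 * v3" "w1 * v2 = w2 * v1" using assms(2) by (auto simp: w v)
  consider "v1 \<noteq> 0" | "v2 \<noteq> 0" | "v3 \<noteq> 0" using assms(1) v by auto
  then show ?thesis
  proof cases
    case 1
    have "w = scale3 (w1 / v1) v" using 1 e by (simp add: w v field_simps; (metis mult.commute)?)
    then show ?thesis by blast
  next
    case 2
    have "w = scale3 (w2 / v2) v" using 2 e by (simp add: w v field_simps; (metis mult.commute)?)
    then show ?thesis by blast
  next
    case 3
    have "w = scale3 (w3 / v3) v" using 3 e by (simp add: w v field_simps; (metis mult.commute)?)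
    then show ?thesis by blast
  qed
qed

lemma cross_cross: "cross w (cross a b) = add3 (scale3 (dot3 w b) a) (scale3 (- dot3 w a) b)"
  by (cases a, cases b, cases w) (simp add: algebra_simps)

lemma mem_proj_point: "u \<in> proj_point v \<longleftrightarrow> (\<exists>c. c \<noteq> 0 \<and> u = scale3 c v)"
  by (auto simp: proj_point_def)

lemma self_proj_point: "v \<in> proj_point v"
  unfolding mem_proj_point by (rule exI[of _ 1]) simp

lemma proj_point_scale: assumes "c \<noteq> 0" shows "proj_point (scale3 c v) = proj_point v"
proof
  show "proj_point (scale3 c v) \<subseteq> proj_point v"
    unfolding proj_point_def using assms by (auto simp: scale3_scale3)
  show "proj_point v \<subseteq> proj_point (scale3 c v)"
  proof
    fix u assume "u \<in> proj_point v"
    then obtain d where d: "d \<noteq> 0" "u = scale3 d v" by (auto simp: mem_proj_point)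
    then have "u = scale3 (d / c) (scale3 c v)" using assms by (simp add: scale3_scale3)
    then show "u \<in> proj_point (scale3 c v)" using d assms by (auto simp: mem_proj_point intro!: exI[of _ "d/c"])
  qed
qed

lemma proj_point_eq_iff:
  assumes "v \<noteq> (0,0,0)" "w \<noteq> (0,0,0)"
  shows "proj_point v = proj_point w \<longleftrightarrow> cross v w = (0,0,0)"
proof
  assume "proj_point v = proj_point w"
  then have "w \<in> proj_point v" using self_proj_point by metis
  then obtain c where "w = scale3 c v" by (auto simp: mem_proj_point)
  then show "cross v w = (0,0,0)" by (simp add: cross_scale_r cross_self)
next
  assume "cross v w = (0,0,0)"
  then have "cross w v = (0,0,0)" using cross_swap[of w v] by simp
  then obtain c where c: "w = scale3 c v" using cross_zero assms by blast
  then have "c \<noteq> 0" using assms by auto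
  then show "proj_point v = proj_point w" using c proj_point_scale by metis
qed

lemma proj_point_nz: assumes "u \<in> proj_point v" "v \<noteq> (0,0,0)" shows "u \<noteq> (0,0,0)"
  using assms by (auto simp: mem_proj_point scale3_eq0)

lemma mem_proj_line_iff:
  assumes "v \<noteq> (0,0,0)"
  shows "proj_point v \<in> proj_line w \<longleftrightarrow> dot3 w v = 0"
proof
  assume "proj_point v \<in> proj_line w"
  then obtain u where u: "u \<noteq> (0,0,0)" "dot3 w u = 0" "proj_point v = proj_point u"
    by (auto simp: proj_line_def)
  then have "v \<in> proj_point u" using self_proj_point by metis
  then obtain c where "v = scale3 c u" by (auto simp: mem_proj_point)
  then show "dot3 w v = 0" using u by (simp add: dot3_scale_r)
next
  assume "dot3 w v = 0"
  then show "proj_point v \<in> proj_line w" unfolding proj_line_def using assms by blast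
qed

lemma proj_line_elem: assumes "P \<in> proj_line w" obtains v where "v \<noteq> (0,0,0)" "dot3 w v = 0" "P = proj_point v"
  using assms by (auto simp: proj_line_def)

lemma PG_lines_elem: assumes "l \<in> PG_lines" obtains w where "w \<noteq> (0,0,0)" "l = proj_line w"
  using assms by (auto simp: PG_lines_def)

lemma proj_line_scale: assumes "c \<noteq> 0" shows "proj_line (scale3 c w) = proj_line w"
  unfolding proj_line_def using assms by (simp add: dot3_scale_l)

lemma line_unique:
  assumes "cross a b \<noteq> (0,0,0)" "w \<noteq> (0,0,0)" "dot3 w a = 0" "dot3 w b = 0"
  shows "proj_line w = proj_line (cross a b)"
proof -
  have "cross w (cross a b) = (0,0,0)" using assms by (simp add: cross_cross)
  then obtain c where c: "w = scale3 c (cross a b)" using cross_zero assms(1) by blast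
  then have "c \<noteq> 0" using assms(2) by auto
  then show ?thesis using c proj_line_scale by metis
qed

lemma dot_cross_a: "dot3 (cross a b) a = 0" by (cases a, cases b) (simp add: algebra_simps)
lemma dot_cross_b: "dot3 (cross a b) b = 0" by (cases a, cases b) (simp add: algebra_simps)

lemma span3:
  fixes a b v :: "'a::field vec3"
  assumes "cross a b \<noteq> (0,0,0)" "dot3 (cross a b) v = 0"
  shows "\<exists>\<alpha> \<beta>. v = add3 (scale3 \<alpha> a) (scale3 \<beta> b)"
proof -
  obtain a1 a2 a3 where a: "a = (a1, a2, a3)" by (cases a)
  obtain b1 b2 b3 where b: "b = (b1, b2, b3)" by (cases b)
  obtain v1 v2 v3 where v: "v = (v1, v2, v3)" by (cases v)
  have d: "(a2 * b3 - a3 * b2) * v1 + (a3 * b1 - a1 * b3) * v2 + (a1 * b2 - a2 * b1) * v3 = 0"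
    using assms(2) by (simp add: a b v)
  consider "a2 * b3 - a3 * b2 \<noteq> 0" | "a3 * b1 - a1 * b3 \<noteq> 0" | "a1 * b2 - a2 * b1 \<noteq> 0"
    using assms(1) by (auto simp: a b)
  then show ?thesis
  proof cases
    case 1
    define n where "n = a2 * b3 - a3 * b2"
    have n: "n \<noteq> 0" using 1 by (simp add: n_def)
    define \<alpha> where "\<alpha> = (v2 * b3 - v3 * b2) / n"
    define \<beta> where "\<beta> = (a2 * v3 - a3 * v2) / n"
    have e1: "(v2 * b3 - v3 * b2) * a1 + (a2 * v3 - a3 * v2) * b1 = n * v1" using d unfolding n_def by algebra
    have e2: "(v2 * b3 - v3 * b2) * a2 + (a2 * v3 - a3 * v2) * b2 = n * v2" unfolding n_def by algebra
    have e3: "(v2 * b3 - v3 * b2) * a3 + (a2 * v3 - a3 * v2) * b3 = n * v3" unfolding n_def by algebra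
    have "\<alpha> * a1 + \<beta> * b1 = v1" "\<alpha> * a2 + \<beta> * b2 = v2" "\<alpha> * a3 + \<beta> * b3 = v3"
      unfolding \<alpha>_def \<beta>_def using comb_div[OF n e1] comb_div[OF n e2] comb_div[OF n e3] by simp_all
    then have "v = add3 (scale3 \<alpha> a) (scale3 \<beta> b)" by (simp add: a b v)
    then show ?thesis by blast
  next
    case 2
    define n where "n = a3 * b1 - a1 * b3"
    have n: "n \<noteq> 0" using 2 by (simp add: n_def)
    define \<alpha> where "\<alpha> = (v3 * b1 - v1 * b3) / n"
    define \<beta> where "\<beta> = (a3 * v1 - a1 * v3) / n"
    have e1: "(v3 * b1 - v1 * b3) * a1 + (a3 * v1 - a1 * v3) * b1 = n * v1" unfolding n_def by algebra
    have e2: "(v3 * b1 - v1 * b3) * a2 + (a3 * v1 - a1 * v3) * b2 = n * v2" using d unfolding n_def by algebra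
    have e3: "(v3 * b1 - v1 * b3) * a3 + (a3 * v1 - a1 * v3) * b3 = n * v3" unfolding n_def by algebra
    have "\<alpha> * a1 + \<beta> * b1 = v1" "\<alpha> * a2 + \<beta> * b2 = v2" "\<alpha> * a3 + \<beta> * b3 = v3"
      unfolding \<alpha>_def \<beta>_def using comb_div[OF n e1] comb_div[OF n e2] comb_div[OF n e3] by simp_all
    then have "v = add3 (scale3 \<alpha> a) (scale3 \<beta> b)" by (simp add: a b v)
    then show ?thesis by blast
  next
    case 3
    define n where "n = a1 * b2 - a2 * b1"
    have n: "n \<noteq> 0" using 3 by (simp add: n_def)
    define \<alpha> where "\<alpha> = (v1 * b2 - v2 * b1) / n"
    define \<beta> where "\<beta> = (a1 * v2 - a2 * v1) / n"
    have e1: "(v1 * b2 - v2 * b1) * a1 + (a1 * v2 - a2 * v1) * b1 = n * v1" unfolding n_def by algebra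
    have e2: "(v1 * b2 - v2 * b1) * a2 + (a1 * v2 - a2 * v1) * b2 = n * v2" unfolding n_def by algebra
    have e3: "(v1 * b2 - v2 * b1) * a3 + (a1 * v2 - a2 * v1) * b3 = n * v3" using d unfolding n_def by algebra
    have "\<alpha> * a1 + \<beta> * b1 = v1" "\<alpha> * a2 + \<beta> * b2 = v2" "\<alpha> * a3 + \<beta> * b3 = v3"
      unfolding \<alpha>_def \<beta>_def using comb_div[OF n e1] comb_div[OF n e2] comb_div[OF n e3] by simp_all
    then have "v = add3 (scale3 \<alpha> a) (scale3 \<beta> b)" by (simp add: a b v)
    then show ?thesis by blast
  qed
qed

lemma det_zero_of_dots:
  fixes w d e f :: "'a::field vec3"
  assumes "w \<noteq> (0,0,0)" "dot3 w d = 0" "dot3 w e = 0" "dot3 w f = 0"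
  shows "dot3 (cross e f) d = 0"
proof -
  obtain w1 w2 w3 where w: "w = (w1, w2, w3)" by (cases w)
  obtain d1 d2 d3 where d: "d = (d1, d2, d3)" by (cases d)
  obtain e1 e2 e3 where e: "e = (e1, e2, e3)" by (cases e)
  obtain f1 f2 f3 where f: "f = (f1, f2, f3)" by (cases f)
  define D where "D = dot3 (cross e f) d"
  have D: "D = (e2 * f3 - e3 * f2) * d1 + (e3 * f1 - e1 * f3) * d2 + (e1 * f2 - e2 * f1) * d3"
    by (simp add: D_def d e f)
  have h: "w1 * d1 + w2 * d2 + w3 * d3 = 0" "w1 * e1 + w2 * e2 + w3 * e3 = 0" "w1 * f1 + w2 * f2 + w3 * f3 = 0"
    using assms by (simp_all add: w d e f)
  have "D * w1 = 0" "D * w2 = 0" "D * w3 = 0" using h unfolding D by algebra+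
  then have "D = 0" using assms(1) w by auto
  then show ?thesis by (simp add: D_def)
qed



locale steiner =
  fixes U :: "'p set" and B :: "'p set set" and q :: nat
  assumes finU: "finite U" and finB: "finite B"
    and cardU: "card U = q^3 + 1" and q2: "q \<ge> 2"
    and blk: "\<And>l. l \<in> B \<Longrightarrow> card (l \<inter> U) = q + 1"
    and two: "\<And>x y. x \<in> U \<Longrightarrow> y \<in> U \<Longrightarrow> x \<noteq> y \<Longrightarrow> \<exists>!l. l \<in> B \<and> x \<in> l \<and> y \<in> l"
    and onan: "\<And>a b c d. a \<in> B \<Longrightarrow> b \<in> B \<Longrightarrow> c \<in> B \<Longrightarrow> d \<in> B \<Longrightarrow>
        a \<noteq> b \<Longrightarrow> a \<noteq> c \<Longrightarrow> a \<noteq> d \<Longrightarrow> b \<noteq> c \<Longrightarrow> b \<noteq> d \<Longrightarrow> c \<noteq> d \<Longrightarrow>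
        (\<exists>p\<in>U. p \<in> a \<and> p \<in> b) \<Longrightarrow> (\<exists>p\<in>U. p \<in> a \<and> p \<in> c) \<Longrightarrow> (\<exists>p\<in>U. p \<in> a \<and> p \<in> d) \<Longrightarrow>
        (\<exists>p\<in>U. p \<in> b \<and> p \<in> c) \<Longrightarrow> (\<exists>p\<in>U. p \<in> b \<and> p \<in> d) \<Longrightarrow> (\<exists>p\<in>U. p \<in> c \<and> p \<in> d) \<Longrightarrow>
        \<exists>p\<in>U. (p \<in> a \<and> p \<in> b \<and> p \<in> c) \<or> (p \<in> a \<and> p \<in> b \<and> p \<in> d) \<or>
               (p \<in> a \<and> p \<in> c \<and> p \<in> d) \<or> (p \<in> b \<and> p \<in> c \<and> p \<in> d)"
begin

definition adj where "adj l m \<longleftrightarrow> l \<in> B \<and> m \<in> B \<and> l \<noteq> m \<and> (\<exists>p\<in>U. p \<in> l \<and> p \<in> m)"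
definition pencil where "pencil x = {l \<in> B. x \<in> l}"
definition fam where "fam = {pencil x | x. x \<in> U}"

definition ln where "ln x y = (THE l. l \<in> B \<and> x \<in> l \<and> y \<in> l)"

lemma ln: assumes "x \<in> U" "y \<in> U" "x \<noteq> y"
  shows "ln x y \<in> B" "x \<in> ln x y" "y \<in> ln x y"
  using theI'[OF two[OF assms]] unfolding ln_def by auto

lemma ln_unique: assumes "x \<in> U" "y \<in> U" "x \<noteq> y" "l \<in> B" "x \<in> l" "y \<in> l"
  shows "l = ln x y"
  using the1_equality[OF two[OF assms(1-3)]] assms unfolding ln_def by auto

lemma meet_unique: assumes "l \<in> B" "m \<in> B" "l \<noteq> m" "x \<in> U" "y \<in> U"
  "x \<in> l" "x \<in> m" "y \<in> l" "y \<in> m" shows "x = y"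
  using assms ln_unique by metis

lemma fin_sub: "finite (A :: 'p set set)" if "A \<subseteq> B" using that finB finite_subset by auto

lemma card_piece: assumes "l \<in> B" "x \<in> l" "x \<in> U" shows "card (l \<inter> U - {x}) = q"
proof -
  have "finite (l \<inter> U)" using finU by auto
  then show ?thesis using blk[OF assms(1)] assms by (simp add: card_Diff_singleton)
qed

lemma card_pencil: assumes "x \<in> U" shows "card (pencil x) = q^2"
proof -
  have eq: "U - {x} = (\<Union>l\<in>pencil x. l \<inter> U - {x})"
  proof
    show "U - {x} \<subseteq> (\<Union>l\<in>pencil x. l \<inter> U - {x})"
    proof
      fix y assume y: "y \<in> U - {x}"
      then have "ln x y \<in> pencil x" "y \<in> ln x y" using ln[of x y] assms by (auto simp: pencil_def)
      then show "y \<in> (\<Union>l\<in>pencil x. l \<inter> U - {x})" using y by auto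
    qed
  qed (auto simp: pencil_def)
  have fp: "finite (pencil x)" by (rule fin_sub) (auto simp: pencil_def)
  have "card (U - {x}) = (\<Sum>l\<in>pencil x. card (l \<inter> U - {x}))"
    unfolding eq
  proof (rule card_UN_disjoint[OF fp])
    show "\<forall>i\<in>pencil x. finite (i \<inter> U - {x})" using finU by auto
    show "\<forall>i\<in>pencil x. \<forall>j\<in>pencil x. i \<noteq> j \<longrightarrow> (i \<inter> U - {x}) \<inter> (j \<inter> U - {x}) = {}"
      using meet_unique assms by (auto simp: pencil_def)
  qed
  also have "\<dots> = (\<Sum>l\<in>pencil x. q)"
  proof (rule sum.cong)
    fix l assume "l \<in> pencil x"
    then show "card (l \<inter> U - {x}) = q" using card_piece assms by (auto simp: pencil_def)
  qed simp
  also have "\<dots> = card (pencil x) * q" by simp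
  finally have "card (pencil x) * q = q^3" using cardU assms finU by (simp add: card_Diff_singleton)
  then have "card (pencil x) * q = q^2 * q" by (simp add: power3_eq_cube power2_eq_square)
  then show ?thesis using q2 by simp
qed

lemma card_B: "card B = q^4 - q^3 + q^2"
proof -
  define S where "S = Sigma U pencil"
  define S' where "S' = Sigma B (\<lambda>l. l \<inter> U)"
  have fS: "finite S" unfolding S_def using finU by (auto intro!: finite_SigmaI fin_sub simp: pencil_def)
  have "card S = (\<Sum>x\<in>U. card (pencil x))"
    unfolding S_def using finU by (intro card_SigmaI) (auto intro!: fin_sub simp: pencil_def)
  also have "\<dots> = (\<Sum>x\<in>U. q^2)" by (rule sum.cong) (auto simp: card_pencil)
  finally have c1: "card S = (q^3+1) * q^2" using cardU by simp
  have "card S' = (\<Sum>l\<in>B. card (l \<inter> U))"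
    unfolding S'_def using finU finB by (intro card_SigmaI) auto
  also have "\<dots> = (\<Sum>l\<in>B. q + 1)" by (rule sum.cong) (auto simp: blk)
  finally have c2: "card S' = card B * (q+1)" by simp
  have "S' = (\<lambda>(x,l). (l,x)) ` S" unfolding S_def S'_def pencil_def by auto
  moreover have "inj_on (\<lambda>(x,l). (l,x)) S" by (auto simp: inj_on_def)
  ultimately have "card S' = card S" by (simp add: card_image)
  then have e: "card B * (q+1) = (q^3+1) * q^2" using c1 c2 by simp
  have le: "q^3 \<le> q^4" using q2 by (simp add: power_increasing)
  have "int (card B) * (int q + 1) = (int q^4 - int q^3 + int q^2) * (int q + 1)"
    using arg_cong[OF e, of int] by (simp add: algebra_simps power_numeral_reduce)
  then have "int (card B) = int q^4 - int q^3 + int q^2" by (smt (verit) mult_right_cancel of_nat_0_le_iff)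
  also have "\<dots> = int (q^4 - q^3 + q^2)" using le by (simp add: of_nat_diff)
  finally show ?thesis by (simp only: of_nat_eq_iff)
qed

lemma card_nbrs: assumes "l \<in> B" shows "card {m. adj l m} = (q + 1) * (q^2 - 1)"
proof -
  have eq: "{m. adj l m} = (\<Union>x\<in>l \<inter> U. pencil x - {l})"
    unfolding adj_def pencil_def using assms by auto
  have "card (\<Union>x\<in>l \<inter> U. pencil x - {l}) = (\<Sum>x\<in>l \<inter> U. card (pencil x - {l}))"
  proof (rule card_UN_disjoint)
    show "finite (l \<inter> U)" using finU by auto
    show "\<forall>i\<in>l \<inter> U. finite (pencil i - {l})" by (auto intro!: fin_sub simp: pencil_def)
    show "\<forall>i\<in>l \<inter> U. \<forall>j\<in>l \<inter> U. i \<noteq> j \<longrightarrow> (pencil i - {l}) \<inter> (pencil j - {l}) = {}"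
      using meet_unique assms unfolding pencil_def by blast
  qed
  also have "\<dots> = (\<Sum>x\<in>l \<inter> U. q^2 - 1)"
  proof (rule sum.cong)
    fix x assume x: "x \<in> l \<inter> U"
    have "finite (pencil x)" by (auto intro!: fin_sub simp: pencil_def)
    then show "card (pencil x - {l}) = q^2 - 1" using x assms card_pencil[of x]
      by (simp add: card_Diff_singleton pencil_def)
  qed simp
  finally show ?thesis using eq blk[OF assms] by simp
qed

lemma pencil_inj: assumes "x \<in> U" "y \<in> U" "pencil x = pencil y" shows "x = y"
proof (rule ccontr)
  assume ne: "x \<noteq> y"
  have sub: "pencil x \<subseteq> {ln x y}"
  proof
    fix l assume "l \<in> pencil x"
    then have "l \<in> pencil y" using assms by simp
    with \<open>l \<in> pencil x\<close> show "l \<in> {ln x y}"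
      using ln_unique[OF assms(1,2) ne] by (auto simp: pencil_def)
  qed
  then have "card (pencil x) \<le> 1" using card_mono[OF _ sub] by simp
  moreover have "2*q \<le> q*q" using q2 by simp
  ultimately show False using card_pencil[OF assms(1)] q2 by (simp add: power2_eq_square)
qed

lemma card_fam: "card fam = q^3 + 1"
proof -
  have "fam = pencil ` U" unfolding fam_def by auto
  moreover have "inj_on pencil U" using pencil_inj by (auto simp: inj_on_def)
  ultimately show ?thesis using cardU by (simp add: card_image)
qed

lemma pencil_max: assumes "x \<in> U" "v \<in> B" "v \<notin> pencil x" "\<forall>u\<in>pencil x. adj u v" shows False
proof -
  define f where "f u = (SOME y. y \<in> U \<and> y \<in> u \<and> y \<in> v)" for u
  have f: "f u \<in> U \<and> f u \<in> u \<and> f u \<in> v" if "u \<in> pencil x" for u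
    using assms(4) that unfolding f_def adj_def by (metis (mono_tags, lifting) someI_ex)
  have xv: "x \<notin> v" using assms by (auto simp: pencil_def)
  have "inj_on f (pencil x)"
  proof (rule inj_onI)
    fix u u' assume u: "u \<in> pencil x" "u' \<in> pencil x" "f u = f u'"
    show "u = u'"
    proof (rule ccontr)
      assume "u \<noteq> u'"
      then have "x = f u" using meet_unique[of u u' x "f u"] f[OF u(1)] f[OF u(2)] u assms(1)
        by (auto simp: pencil_def)
      then show False using f[OF u(1)] xv by simp
    qed
  qed
  moreover have "f ` pencil x \<subseteq> v \<inter> U" using f by auto
  ultimately have "card (pencil x) \<le> card (v \<inter> U)"
    using finU by (intro card_inj_on_le) auto
  then have "q^2 \<le> q + 1" using card_pencil[OF assms(1)] blk[OF assms(2)] by simp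
  moreover have "2*q \<le> q*q" using q2 by simp
  then have "q + 1 < q^2" using q2 unfolding power2_eq_square by linarith
  ultimately show False by simp
qed

lemma pencil_inter: assumes "x \<in> U" "y \<in> U" "x \<noteq> y" shows "card (pencil x \<inter> pencil y) = 1"
proof -
  have "pencil x \<inter> pencil y = {ln x y}"
  proof
    show "pencil x \<inter> pencil y \<subseteq> {ln x y}"
    proof
      fix l assume "l \<in> pencil x \<inter> pencil y"
      then have "l \<in> B" "x \<in> l" "y \<in> l" by (auto simp: pencil_def)
      then show "l \<in> {ln x y}" using ln_unique[OF assms] by blast
    qed
    show "{ln x y} \<subseteq> pencil x \<inter> pencil y" using ln[OF assms] by (simp add: pencil_def)
  qed
  then show ?thesis by simp
qed

lemma fam_cont: assumes "v \<in> B" shows "card {C \<in> fam. v \<in> C} = q + 1"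
proof -
  have "{C \<in> fam. v \<in> C} = pencil ` (v \<inter> U)"
  proof
    show "{C \<in> fam. v \<in> C} \<subseteq> pencil ` (v \<inter> U)"
    proof
      fix C assume "C \<in> {C \<in> fam. v \<in> C}"
      then obtain x where "x \<in> U" "C = pencil x" "v \<in> C" unfolding fam_def by blast
      then have "x \<in> v \<inter> U" by (simp add: pencil_def)
      then show "C \<in> pencil ` (v \<inter> U)" using \<open>C = pencil x\<close> by blast
    qed
    show "pencil ` (v \<inter> U) \<subseteq> {C \<in> fam. v \<in> C}"
    proof
      fix C assume "C \<in> pencil ` (v \<inter> U)"
      then obtain x where "x \<in> v" "x \<in> U" "C = pencil x" by blast
      then show "C \<in> {C \<in> fam. v \<in> C}" using assms unfolding fam_def pencil_def by blast
    qed
  qed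
  moreover have "inj_on pencil (v \<inter> U)" using pencil_inj by (auto simp: inj_on_def)
  ultimately show ?thesis using blk[OF assms] by (simp add: card_image)
qed

lemma edge_unique: assumes "adj u v" shows "card {C \<in> fam. u \<in> C \<and> v \<in> C} = 1"
proof -
  obtain x where x: "x \<in> U" "x \<in> u" "x \<in> v" using assms by (auto simp: adj_def)
  have "{C \<in> fam. u \<in> C \<and> v \<in> C} = {pencil x}"
  proof
    show "{C \<in> fam. u \<in> C \<and> v \<in> C} \<subseteq> {pencil x}"
    proof
      fix C assume "C \<in> {C \<in> fam. u \<in> C \<and> v \<in> C}"
      then obtain y where y: "y \<in> U" "C = pencil y" "u \<in> pencil y" "v \<in> pencil y" unfolding fam_def by auto
      then have "y = x" using meet_unique[of u v y x] x assms by (auto simp: adj_def pencil_def)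
      then show "C \<in> {pencil x}" using y by simp
    qed
    show "{pencil x} \<subseteq> {C \<in> fam. u \<in> C \<and> v \<in> C}"
      using x assms by (auto simp: fam_def pencil_def adj_def)
  qed
  then show ?thesis by simp
qed

lemma three: assumes "x \<in> S" "y \<in> S" "z \<in> S" "x \<noteq> y" "x \<noteq> z" "y \<noteq> z" "finite S"
  shows "card S \<ge> 3"
proof -
  have "{x,y,z} \<subseteq> S" using assms by simp
  from card_mono[OF assms(7) this] show ?thesis using assms(4-6) by simp
qed

lemma adjD: "adj l m \<Longrightarrow> l \<in> B" "adj l m \<Longrightarrow> m \<in> B" "adj l m \<Longrightarrow> l \<noteq> m"
  "adj l m \<Longrightarrow> \<exists>p\<in>U. p \<in> l \<and> p \<in> m"
  by (simp_all add: adj_def)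

lemma K4: assumes "adj a b" "adj a c" "adj a d" "adj b c" "adj b d" "adj c d"
  shows "\<exists>C\<in>fam. card ({a, b, c, d} \<inter> C) \<ge> 3"
proof -
  note B = adjD(1)[OF assms(1)] adjD(2)[OF assms(1)] adjD(2)[OF assms(2)] adjD(2)[OF assms(3)]
  note ne = adjD(3)[OF assms(1)] adjD(3)[OF assms(2)] adjD(3)[OF assms(3)]
    adjD(3)[OF assms(4)] adjD(3)[OF assms(5)] adjD(3)[OF assms(6)]
  note e = adjD(4)[OF assms(1)] adjD(4)[OF assms(2)] adjD(4)[OF assms(3)]
    adjD(4)[OF assms(4)] adjD(4)[OF assms(5)] adjD(4)[OF assms(6)]
  obtain p where p: "p \<in> U" and p2: "(p \<in> a \<and> p \<in> b \<and> p \<in> c) \<or> (p \<in> a \<and> p \<in> b \<and> p \<in> d) \<or>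
               (p \<in> a \<and> p \<in> c \<and> p \<in> d) \<or> (p \<in> b \<and> p \<in> c \<and> p \<in> d)"
    using onan[OF B ne e] by blast
  have F: "finite ({a, b, c, d} \<inter> pencil p)" by simp
  have mem: "l \<in> {a, b, c, d} \<inter> pencil p" if "l \<in> {a,b,c,d}" "p \<in> l" for l
    using that B unfolding pencil_def by blast
  have "pencil p \<in> fam" using p unfolding fam_def by blast
  moreover have "card ({a, b, c, d} \<inter> pencil p) \<ge> 3"
    using p2
  proof (elim disjE conjE)
    assume "p \<in> a" "p \<in> b" "p \<in> c" then show ?thesis
      using three[OF mem mem mem _ _ _ F, of a b c] ne by simp
  next
    assume "p \<in> a" "p \<in> b" "p \<in> d" then show ?thesis
      using three[OF mem mem mem _ _ _ F, of a b d] ne by simp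
  next
    assume "p \<in> a" "p \<in> c" "p \<in> d" then show ?thesis
      using three[OF mem mem mem _ _ _ F, of a c d] ne by simp
  next
    assume "p \<in> b" "p \<in> c" "p \<in> d" then show ?thesis
      using three[OF mem mem mem _ _ _ F, of b c d] ne by simp
  qed
  ultimately show ?thesis by blast
qed

lemma common_adj: assumes "adj u v" shows "card {w \<in> B. adj u w \<and> adj v w} = 2 * q^2 - 2"
proof -
  obtain x where x: "x \<in> U" "x \<in> u" "x \<in> v" using assms by (auto simp: adj_def)
  have uB: "u \<in> B" "v \<in> B" "u \<noteq> v" using assms by (auto simp: adj_def)
  have only: "y = x" if "y \<in> U" "y \<in> u" "y \<in> v" for y using meet_unique[of u v y x] that x uB by auto
  define P where "P = (u \<inter> U - {x}) \<times> (v \<inter> U - {x})"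
  define S1 where "S1 = pencil x - {u, v}"
  define S2 where "S2 = (\<lambda>(y,z). ln y z) ` P"
  have eq: "{w \<in> B. adj u w \<and> adj v w} = S1 \<union> S2"
  proof
    show "{w \<in> B. adj u w \<and> adj v w} \<subseteq> S1 \<union> S2"
    proof
      fix w assume w: "w \<in> {w \<in> B. adj u w \<and> adj v w}"
      show "w \<in> S1 \<union> S2"
      proof (cases "x \<in> w")
        case True then show ?thesis using w by (auto simp: S1_def pencil_def adj_def)
      next
        case False
        obtain y where y: "y \<in> U" "y \<in> u" "y \<in> w" using w by (auto simp: adj_def)
        obtain z where z: "z \<in> U" "z \<in> v" "z \<in> w" using w by (auto simp: adj_def)
        have "y \<noteq> x" "z \<noteq> x" using y z False by auto
        then have yz: "y \<noteq> z" using only y z by auto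
        have "w = ln y z" using ln_unique[OF y(1) z(1) yz] w y z by auto
        moreover have "(y,z) \<in> P" using y z \<open>y \<noteq> x\<close> \<open>z \<noteq> x\<close> by (auto simp: P_def)
        ultimately show ?thesis by (auto simp: S2_def)
      qed
    qed
    show "S1 \<union> S2 \<subseteq> {w \<in> B. adj u w \<and> adj v w}"
    proof
      fix w assume "w \<in> S1 \<union> S2"
      then show "w \<in> {w \<in> B. adj u w \<and> adj v w}"
      proof
        assume "w \<in> S1" then show ?thesis using x uB by (auto simp: S1_def pencil_def adj_def)
      next
        assume "w \<in> S2"
        then obtain y z where yz: "(y,z) \<in> P" "w = ln y z" by (auto simp: S2_def)
        have y: "y \<in> U" "y \<in> u" "y \<noteq> x" and z: "z \<in> U" "z \<in> v" "z \<noteq> x" using yz by (auto simp: P_def)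
        have ne: "y \<noteq> z" using only y z by auto
        note L = ln[OF y(1) z(1) ne]
        have "w \<noteq> u" using only[of z] z L yz by auto
        moreover have "w \<noteq> v" using only[of y] y L yz by auto
        ultimately show ?thesis using L yz y z uB by (auto simp: adj_def)
      qed
    qed
  qed
  have disj: "S1 \<inter> S2 = {}"
  proof (rule ccontr)
    assume "S1 \<inter> S2 \<noteq> {}"
    then obtain w y z where w: "w \<in> S1" "(y,z) \<in> P" "w = ln y z" by (auto simp: S2_def)
    have y: "y \<in> U" "y \<in> u" "y \<noteq> x" and z: "z \<in> U" "z \<in> v" "z \<noteq> x" using w by (auto simp: P_def)
    have ne: "y \<noteq> z" using only y z by auto
    note L = ln[OF y(1) z(1) ne]
    have "w \<noteq> u" using w by (auto simp: S1_def)
    moreover have "w \<in> B" "x \<in> w" using w by (auto simp: S1_def pencil_def)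
    ultimately show False using meet_unique[of w u x y] x y L w uB by auto
  qed
  have inj: "inj_on (\<lambda>(y,z). ln y z) P"
  proof (rule inj_onI, clarify)
    fix y z y' z' assume a: "(y,z) \<in> P" "(y',z') \<in> P" "ln y z = ln y' z'"
    have y: "y \<in> U" "y \<in> u" "y \<noteq> x" and z: "z \<in> U" "z \<in> v" "z \<noteq> x"
      and y': "y' \<in> U" "y' \<in> u" "y' \<noteq> x" and z': "z' \<in> U" "z' \<in> v" "z' \<noteq> x" using a by (auto simp: P_def)
    have ne: "y \<noteq> z" "y' \<noteq> z'" using only y z y' z' by auto
    note L = ln[OF y(1) z(1) ne(1)] and L' = ln[OF y'(1) z'(1) ne(2)]
    have wu: "ln y z \<noteq> u" using only[of z] z L by auto
    have wv: "ln y z \<noteq> v" using only[of y] y L by auto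
    have "y = y'" using meet_unique[of "ln y z" u y y'] L L' a(3) wu y y' uB by auto
    moreover have "z = z'" using meet_unique[of "ln y z" v z z'] L L' a(3) wv z z' uB by auto
    ultimately show "y = y' \<and> z = z'" by simp
  qed
  have fP: "finite P" using finU by (auto simp: P_def)
  have cS2: "card S2 = q * q"
  proof -
    have "card S2 = card P" unfolding S2_def using card_image[OF inj] .
    also have "\<dots> = card (u \<inter> U - {x}) * card (v \<inter> U - {x})" by (simp add: P_def card_cartesian_product)
    also have "\<dots> = q * q" using card_piece[of u x] card_piece[of v x] x uB by simp
    finally show ?thesis .
  qed
  have cS1: "card S1 = q^2 - 2"
  proof -
    have "finite (pencil x)" by (auto intro!: fin_sub simp: pencil_def)
    moreover have "{u,v} \<subseteq> pencil x" using x uB by (auto simp: pencil_def)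
    ultimately show ?thesis using card_pencil[OF x(1)] uB unfolding S1_def by (simp add: card_Diff_subset)
  qed
  have "finite S1" "finite S2" using fP by (auto intro!: fin_sub simp: S1_def pencil_def S2_def)
  then have "card (S1 \<union> S2) = card S1 + card S2" using disj card_Un_disjoint by blast
  moreover have "2*q \<le> q*q" using q2 by simp
  then have "q^2 \<ge> 2" using q2 unfolding power2_eq_square by linarith
  ultimately show ?thesis using eq cS1 cS2 by (simp add: power2_eq_square)
qed

lemma common_nonadj: assumes "u \<in> B" "v \<in> B" "u \<noteq> v" "\<not> adj u v"
  shows "card {w \<in> B. adj u w \<and> adj v w} = (q + 1)^2"
proof -
  have nox: "\<not> (y \<in> U \<and> y \<in> u \<and> y \<in> v)" for y using assms by (auto simp: adj_def)
  define P where "P = (u \<inter> U) \<times> (v \<inter> U)"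
  have eq: "{w \<in> B. adj u w \<and> adj v w} = (\<lambda>(y,z). ln y z) ` P"
  proof
    show "{w \<in> B. adj u w \<and> adj v w} \<subseteq> (\<lambda>(y,z). ln y z) ` P"
    proof
      fix w assume w: "w \<in> {w \<in> B. adj u w \<and> adj v w}"
      obtain y where y: "y \<in> U" "y \<in> u" "y \<in> w" using w by (auto simp: adj_def)
      obtain z where z: "z \<in> U" "z \<in> v" "z \<in> w" using w by (auto simp: adj_def)
      have yz: "y \<noteq> z" using nox y z by auto
      have "w = ln y z" using ln_unique[OF y(1) z(1) yz] w y z by auto
      moreover have "(y,z) \<in> P" using y z by (auto simp: P_def)
      ultimately show "w \<in> (\<lambda>(y,z). ln y z) ` P" by auto
    qed
    show "(\<lambda>(y,z). ln y z) ` P \<subseteq> {w \<in> B. adj u w \<and> adj v w}"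
    proof
      fix w assume "w \<in> (\<lambda>(y,z). ln y z) ` P"
      then obtain y z where "(y,z) \<in> P" and wdef: "w = ln y z" by auto
      then have y: "y \<in> U" "y \<in> u" and z: "z \<in> U" "z \<in> v" by (auto simp: P_def)
      have ne: "y \<noteq> z" using nox y z by auto
      note L = ln[OF y(1) z(1) ne]
      have "ln y z \<noteq> u" using nox[of z] z L by auto
      moreover have "ln y z \<noteq> v" using nox[of y] y L by auto
      ultimately show "w \<in> {w \<in> B. adj u w \<and> adj v w}" using L y z assms wdef by (auto simp: adj_def)
    qed
  qed
  have inj: "inj_on (\<lambda>(y,z). ln y z) P"
  proof (rule inj_onI, clarify)
    fix y z y' z' assume a: "(y,z) \<in> P" "(y',z') \<in> P" "ln y z = ln y' z'"
    have y: "y \<in> U" "y \<in> u" and z: "z \<in> U" "z \<in> v"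
      and y': "y' \<in> U" "y' \<in> u" and z': "z' \<in> U" "z' \<in> v" using a by (auto simp: P_def)
    have ne: "y \<noteq> z" "y' \<noteq> z'" using nox y z y' z' by auto
    note L = ln[OF y(1) z(1) ne(1)] and L' = ln[OF y'(1) z'(1) ne(2)]
    have wu: "ln y z \<noteq> u" using nox[of z] z L by auto
    have wv: "ln y z \<noteq> v" using nox[of y] y L by auto
    have "y = y'" using meet_unique[of "ln y z" u y y'] L L' a(3) wu y y' assms by auto
    moreover have "z = z'" using meet_unique[of "ln y z" v z z'] L L' a(3) wv z z' assms by auto
    ultimately show "y = y' \<and> z = z'" by simp
  qed
  have fP: "finite P" using finU by (auto simp: P_def)
  show ?thesis unfolding eq using card_image[OF inj] fP
    by (simp add: P_def card_cartesian_product blk assms power2_eq_square)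
qed

lemma pencil_clique: assumes "x \<in> U" shows "pencil x \<subseteq> B" "\<forall>u\<in>pencil x. \<forall>v\<in>pencil x. u \<noteq> v \<longrightarrow> adj u v"
  using assms by (auto simp: pencil_def adj_def)

end



lemma cauchy_binet3:
  fixes a1 a2 a3 b1 b2 b3 c1 c2 c3 x1 x2 x3 y1 y2 y3 z1 z2 z3 :: "'a::comm_ring_1"
  shows "((b2*c3 - b3*c2)*a1 + (b3*c1 - b1*c3)*a2 + (b1*c2 - b2*c1)*a3) *
         ((y2*z3 - y3*z2)*x1 + (y3*z1 - y1*z3)*x2 + (y1*z2 - y2*z1)*x3) =
   (a1*x1+a2*x2+a3*x3) * ((b1*y1+b2*y2+b3*y3)*(c1*z1+c2*z2+c3*z3) - (b1*z1+b2*z2+b3*z3)*(c1*y1+c2*y2+c3*y3))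
 - (a1*y1+a2*y2+a3*y3) * ((b1*x1+b2*x2+b3*x3)*(c1*z1+c2*z2+c3*z3) - (b1*z1+b2*z2+b3*z3)*(c1*x1+c2*x2+c3*x3))
 + (a1*z1+a2*z2+a3*z3) * ((b1*x1+b2*x2+b3*x3)*(c1*y1+c2*y2+c3*y3) - (b1*y1+b2*y2+b3*y3)*(c1*x1+c2*x2+c3*x3))"
  by (simp add: algebra_simps)

lemma cauchy_binet_vec:
  "dot3 (cross b c) a * dot3 (cross y z) x =
     dot3 a x * (dot3 b y * dot3 c z - dot3 b z * dot3 c y)
   - dot3 a y * (dot3 b x * dot3 c z - dot3 b z * dot3 c x)
   + dot3 a z * (dot3 b x * dot3 c y - dot3 b y * dot3 c x)"
  by (cases a, cases b, cases c, cases x, cases y, cases z) (simp only: dot3_simp cross_simp cauchy_binet3)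

lemma dot3_comm: "dot3 u v = dot3 v u" by (cases u, cases v) (simp add: mult.commute)

lemma det_param:
  "dot3 (cross (add3 c (scale3 t a)) (add3 a (scale3 u b))) (add3 b (scale3 s c)) =
   (1 + s * t * u) * dot3 (cross b c) a"
  by (cases a, cases b, cases c) (simp add: algebra_simps)

lemma cross_param_b: "cross (add3 a (scale3 t b)) b = cross a b"
  by (cases a, cases b) (simp add: algebra_simps)

lemma cross_param2: "cross (add3 a (scale3 t b)) (add3 a (scale3 t' b)) = scale3 (t' - t) (cross a b)"
  by (cases a, cases b) (simp add: algebra_simps)

lemma dot_cross_param: "dot3 (cross a b) (add3 a (scale3 t b)) = 0"
  by (cases a, cases b) (simp add: algebra_simps)

lemma comb_rescale: assumes "\<alpha> \<noteq> 0"
  shows "add3 (scale3 \<alpha> a) (scale3 \<beta> b) = scale3 \<alpha> (add3 a (scale3 (\<beta> / \<alpha>) b))"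
  using assms by (cases a, cases b) (simp add: algebra_simps)

lemma comb_zero: "add3 (scale3 0 a) (scale3 \<beta> b) = scale3 \<beta> b"
  by (cases a, cases b) simp

context hq
begin

definition sv where "sv v = (case v of (x, y, z) \<Rightarrow> (sig x, sig y, sig z))"
lemma sv_simp[simp]: "sv (x, y, z) = (sig x, sig y, sig z)" by (simp add: sv_def)
definition herm where "herm u v = dot3 u (sv v)"
definition hv where "hv v = herm v v"

lemma hv_simp: "hv (x, y, z) = nm x + nm y + nm z" by (simp add: hv_def herm_def nm_def)

lemma hv_scale: "hv (scale3 c v) = nm c * hv v"
  by (cases v) (simp add: hv_def herm_def nm_def sig_mult algebra_simps)

lemma herm_swap: "herm b a = sig (herm a b)"
  by (cases a, cases b) (simp add: herm_def sig_add sig_mult)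

lemma hv_line: "hv (add3 a (scale3 t b)) = hv a + sig t * herm a b + t * herm b a + nm t * hv b"
  by (cases a, cases b) (simp add: hv_def herm_def nm_def sig_add sig_mult algebra_simps)

lemma sv_cross: "sv (cross a b) = cross (sv a) (sv b)"
  by (cases a, cases b) (simp add: sig_diff sig_mult)

lemma sv_zero: "sv v = (0,0,0) \<longleftrightarrow> v = (0,0,0)" by (cases v) simp

lemma sig_det: "sig (dot3 (cross b c) a) = dot3 (cross (sv b) (sv c)) (sv a)"
  by (cases a, cases b, cases c) (simp add: sig_add sig_diff sig_mult)

lemma unital_eq: "hermitian_unital q = proj_point ` {v. v \<noteq> (0,0,0) \<and> hv v = 0}"
proof -
  have "hermitian_unital q = {proj_point v | v. v \<noteq> (0,0,0) \<and> hv v = 0}"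
    unfolding hermitian_unital_def by (force simp: hv_simp nm_pow)
  then show ?thesis by auto
qed

lemma unital_iff: assumes "v \<noteq> (0,0,0)" shows "proj_point v \<in> hermitian_unital q \<longleftrightarrow> hv v = 0"
proof
  assume "proj_point v \<in> hermitian_unital q"
  then obtain u where u: "u \<noteq> (0,0,0)" "hv u = 0" "proj_point v = proj_point u" by (auto simp: unital_eq)
  then have "v \<in> proj_point u" using self_proj_point by metis
  then obtain c where "v = scale3 c u" by (auto simp: mem_proj_point)
  then show "hv v = 0" using u by (simp add: hv_scale)
qed (use assms in \<open>auto simp: unital_eq\<close>)

lemma unital_elem: assumes "P \<in> hermitian_unital q"
  obtains v where "v \<noteq> (0,0,0)" "hv v = 0" "P = proj_point v"
  using assms by (auto simp: unital_eq)

lemma dot_sv_herm: "dot3 (sv x) y = herm y x" unfolding herm_def by (rule dot3_comm)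

lemma isotropic:
  assumes "hv a = 0" "hv b = 0" "herm a b = 0" "cross a b \<noteq> (0,0,0)"
  shows False
proof -
  define n where "n = cross a b"
  have hba: "herm b a = 0" using assms(3) herm_swap[of b a] by simp
  have haa: "herm a a = 0" "herm b b = 0" using assms(1,2) by (simp_all add: hv_def)
  have "cross (sv a) n = (0,0,0)"
    unfolding n_def cross_cross dot_sv_herm hba haa by simp
  then obtain c1 where c1: "sv a = scale3 c1 n" using cross_zero assms(4) n_def by blast
  have "cross (sv b) n = (0,0,0)"
    unfolding n_def cross_cross dot_sv_herm assms(3) haa by simp
  then obtain c2 where c2: "sv b = scale3 c2 n" using cross_zero assms(4) n_def by blast
  have "sv (cross a b) = (0,0,0)" unfolding sv_cross c1 c2 by (simp add: cross_scale_l cross_scale_r cross_self)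
  then show False using assms(4) sv_zero by simp
qed

lemma param_point:
  assumes "cross x y \<noteq> (0,0,0)" "v \<noteq> (0,0,0)" "dot3 (cross x y) v = 0"
    "proj_point v \<noteq> proj_point y"
  obtains s where "add3 x (scale3 s y) \<noteq> (0,0,0)" "proj_point v = proj_point (add3 x (scale3 s y))"
     "hv v = 0 \<Longrightarrow> hv (add3 x (scale3 s y)) = 0"
proof -
  obtain \<alpha> \<beta> where v: "v = add3 (scale3 \<alpha> x) (scale3 \<beta> y)" using span3 assms(1,3) by blast
  have a0: "\<alpha> \<noteq> 0"
  proof
    assume "\<alpha> = 0"
    then have "v = scale3 \<beta> y" using v comb_zero by simp
    moreover then have "\<beta> \<noteq> 0" using assms(2) by auto
    ultimately show False using assms(4) proj_point_scale by metis
  qed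
  define w where "w = add3 x (scale3 (\<beta> / \<alpha>) y)"
  have vw: "v = scale3 \<alpha> w" using v comb_rescale[OF a0] w_def by simp
  have "w \<noteq> (0,0,0)" using assms(2) vw by auto
  moreover have "proj_point v = proj_point w" using vw proj_point_scale a0 by simp
  moreover have "hv w = 0" if "hv v = 0" using that vw a0 by (simp add: hv_scale)
  ultimately show ?thesis using that w_def by blast
qed

lemma param_nz: assumes "cross a b \<noteq> (0,0,0)" shows "add3 a (scale3 t b) \<noteq> (0,0,0)"
proof
  assume "add3 a (scale3 t b) = (0,0,0)"
  then have "cross (add3 a (scale3 t b)) b = (0,0,0)" by (cases b) simp
  then show False using assms cross_param_b[of a t b] by simp
qed

lemma secant_card:
  assumes a: "a \<noteq> (0,0,0)" "hv a = 0" and b: "b \<noteq> (0,0,0)" "hv b = 0" and ab: "cross a b \<noteq> (0,0,0)"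
  shows "card (proj_line (cross a b) \<inter> hermitian_unital q) = q + 1"
proof -
  define h where "h = herm a b"
  have h0: "h \<noteq> 0"
  proof
    assume "h = 0"
    then show False using isotropic[OF a(2) b(2) _ ab] h_def by simp
  qed
  define K where "K = {t. tr (t * sig h) = 0}"
  define p where "p t = add3 a (scale3 t b)" for t
  have hvp: "hv (p t) = tr (t * sig h)" for t
    unfolding p_def hv_line using a b by (simp add: tr_def h_def herm_swap[of b a] sig_mult algebra_simps)
  have pnz: "p t \<noteq> (0,0,0)" for t using param_nz[OF ab] by (simp add: p_def)
  have eq: "proj_line (cross a b) \<inter> hermitian_unital q = insert (proj_point b) ((\<lambda>t. proj_point (p t)) ` K)"
  proof
    show "proj_line (cross a b) \<inter> hermitian_unital q \<subseteq> insert (proj_point b) ((\<lambda>t. proj_point (p t)) ` K)"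
    proof
      fix P assume P: "P \<in> proj_line (cross a b) \<inter> hermitian_unital q"
      then have "P \<in> proj_line (cross a b)" by simp
      then obtain v where v: "v \<noteq> (0,0,0)" "dot3 (cross a b) v = 0" "P = proj_point v"
        by (rule proj_line_elem)
      have hv: "hv v = 0" using P v unital_iff by simp
      show "P \<in> insert (proj_point b) ((\<lambda>t. proj_point (p t)) ` K)"
      proof (cases "P = proj_point b")
        case False
        then have ne: "proj_point v \<noteq> proj_point b" using v(3) by simp
        obtain s where s1: "proj_point v = proj_point (add3 a (scale3 s b))"
          and s2: "hv v = 0 \<Longrightarrow> hv (add3 a (scale3 s b)) = 0"
          using param_point[OF ab v(1,2) ne] by blast
        have "hv (p s) = 0" using s2 hv by (simp add: p_def)
        then have "s \<in> K" using hvp by (simp add: K_def)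
        moreover have "P = proj_point (p s)" using s1 v(3) by (simp add: p_def)
        ultimately show ?thesis by blast
      qed simp
    qed
    show "insert (proj_point b) ((\<lambda>t. proj_point (p t)) ` K) \<subseteq> proj_line (cross a b) \<inter> hermitian_unital q"
    proof
      fix P assume "P \<in> insert (proj_point b) ((\<lambda>t. proj_point (p t)) ` K)"
      then show "P \<in> proj_line (cross a b) \<inter> hermitian_unital q"
      proof
        assume "P = proj_point b"
        then show ?thesis using b by (simp add: unital_iff[OF b(1)] mem_proj_line_iff[OF b(1)] dot_cross_b)
      next
        assume "P \<in> (\<lambda>t. proj_point (p t)) ` K"
        then obtain t where t: "t \<in> K" "P = proj_point (p t)" by auto
        have "hv (p t) = 0" using t hvp by (simp add: K_def)
        then show ?thesis using t by (simp add: unital_iff[OF pnz] mem_proj_line_iff[OF pnz]) (simp add: p_def dot_cross_param)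
      qed
    qed
  qed
  have inj: "inj_on (\<lambda>t. proj_point (p t)) K"
  proof (rule inj_onI)
    fix t t' assume "proj_point (p t) = proj_point (p t')"
    then have "cross (p t) (p t') = (0,0,0)" using proj_point_eq_iff pnz by blast
    then have "scale3 (t' - t) (cross a b) = (0,0,0)" by (simp add: p_def cross_param2)
    then have "t' - t = 0" using ab by (simp only: scale3_eq0) simp
    then show "t = t'" by simp
  qed
  have notin: "proj_point b \<notin> (\<lambda>t. proj_point (p t)) ` K"
  proof
    assume "proj_point b \<in> (\<lambda>t. proj_point (p t)) ` K"
    then obtain t where "proj_point b = proj_point (p t)" by auto
    then have "cross (p t) b = (0,0,0)" using proj_point_eq_iff pnz b by metis
    then have "cross (add3 a (scale3 t b)) b = (0,0,0)" by (simp add: p_def)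
    then show False using ab cross_param_b[of a t b] by argo
  qed
  have cK: "card K = q"
  proof -
    have sh: "sig h \<noteq> 0" using h0 by simp
    have "K = (\<lambda>x. x / sig h) ` kr"
    proof
      show "K \<subseteq> (\<lambda>x. x / sig h) ` kr"
      proof
        fix t assume "t \<in> K"
        then show "t \<in> (\<lambda>x. x / sig h) ` kr" using sh
          by (intro image_eqI[of _ _ "t * sig h"]) (auto simp: K_def kr_def)
      qed
      show "(\<lambda>x. x / sig h) ` kr \<subseteq> K" using sh by (auto simp: K_def kr_def)
    qed
    moreover have "inj_on (\<lambda>x. x / sig h) kr" using sh by (auto simp: inj_on_def)
    ultimately show ?thesis using card_kr by (simp add: card_image)
  qed
  show ?thesis unfolding eq using notin card_image[OF inj] cK by simp
qed

end



context hq
begin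

lemma neg_eq_add: "(- a = (b::'b::ab_group_add)) = (a + b = 0)" by (auto simp: add_eq_0_iff)

lemma Fq_neg_sum: "- (nm x + nm y) \<in> Fq"
  using nm_Fq[of x] nm_Fq[of y] by (simp add: Fq_def sig_add sig_minus sig_diff)

lemma Fq_neg: "- nm y \<in> Fq"
  using nm_Fq[of y] by (simp add: Fq_def sig_minus)

lemma g_int: assumes "c \<in> Fq"
  shows "int (card {z. nm z = c}) = int q + 1 - int q * of_bool (c = 0)"
proof (cases "c = 0")
  case True
  have "{z. nm z = c} = {0}" using True by auto
  then show ?thesis using True by simp
next
  case False
  then show ?thesis using card_nm[OF assms False] by simp
qed

lemma card_T: "int (card {v :: 'a vec3. hv v = 0}) = int q ^ 5 - int q ^ 3 + int q ^ 2"
proof -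
  define g where "g c = card {z::'a. nm z = c}" for c
  have seteq: "{v :: 'a vec3. hv v = 0} = Sigma UNIV (\<lambda>x. Sigma UNIV (\<lambda>y. {z. nm x + nm y + nm z = 0}))"
    by (auto simp: hv_simp)
  have ce: "{z. A + nm z = 0} = {z. nm z = - A}" for A
    by (rule Collect_cong) (metis add.commute eq_neg_iff_add_eq_0)
  have "card {v :: 'a vec3. hv v = 0} = (\<Sum>x\<in>UNIV. \<Sum>y\<in>UNIV. g (- (nm x + nm y)))"
    unfolding seteq g_def by (simp add: ce)
  then have "int (card {v :: 'a vec3. hv v = 0}) = (\<Sum>x\<in>UNIV. \<Sum>y\<in>UNIV. int (g (- (nm x + nm y))))"
    by simp
  also have "\<dots> = (\<Sum>x\<in>UNIV. \<Sum>y\<in>(UNIV::'a set). int q + 1 - int q * of_bool (nm x + nm y = 0))"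
    unfolding g_def using g_int[OF Fq_neg_sum] by (simp add: neg_equal_0_iff_equal neg_eq_add)
  also have "\<dots> = (\<Sum>x\<in>(UNIV::'a set). \<Sum>y\<in>(UNIV::'a set). int q + 1) - int q * (\<Sum>x\<in>UNIV. \<Sum>y\<in>(UNIV::'a set). of_bool (nm x + nm y = 0))"
    by (simp add: sum_subtractf sum_distrib_left del: sum_of_bool_eq)
  also have "(\<Sum>x\<in>UNIV. \<Sum>y\<in>(UNIV::'a set). of_bool (nm x + nm y = 0)) = (\<Sum>y\<in>(UNIV::'a set). \<Sum>x\<in>UNIV. (of_bool (nm x + nm y = 0) :: int))"
    by (rule sum.swap)
  also have "\<dots> = (\<Sum>y\<in>(UNIV::'a set). int (g (- nm y)))"
  proof (rule sum.cong)
    fix y :: 'a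
    have "{x. nm x + nm y = 0} = {x. nm x = - nm y}" by (rule Collect_cong) (metis eq_neg_iff_add_eq_0)
    then show "(\<Sum>x\<in>UNIV. (of_bool (nm x + nm y = 0) :: int)) = int (g (- nm y))"
      by (simp add: g_def)
  qed simp
  also have "\<dots> = (\<Sum>y\<in>(UNIV::'a set). int q + 1 - int q * of_bool (y = 0))"
    unfolding g_def using g_int[OF Fq_neg] by simp
  also have "\<dots> = int (q^2) * (int q + 1) - int q"
    using cardF by (simp add: sum_subtractf)
  finally show ?thesis using cardF by (simp add: algebra_simps power2_eq_square power3_eq_cube power_numeral_reduce)
qed

lemma card_proj_point: fixes v :: "'a vec3" assumes "v \<noteq> (0,0,0)" shows "card (proj_point v) = q^2 - 1"
proof -
  have "proj_point v = (\<lambda>c. scale3 c v) ` (UNIV - {0})" by (auto simp: proj_point_def)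
  moreover have "inj_on (\<lambda>c. scale3 c v) (UNIV - {0})"
  proof (rule inj_onI)
    fix c d assume "scale3 c v = scale3 d v"
    then show "c = d" using assms by (cases v) auto
  qed
  ultimately show ?thesis by (simp add: card_image card_Diff_singleton cardF)
qed

lemma card_unital: "card (hermitian_unital q :: 'a vec3 set set) = q^3 + 1"
proof -
  define Vs where "Vs = {v :: 'a vec3. v \<noteq> (0,0,0) \<and> hv v = 0}"
  have U: "hermitian_unital q = proj_point ` Vs" unfolding Vs_def unital_eq ..
  have UV: "\<Union> (proj_point ` Vs) = Vs"
  proof
    show "\<Union> (proj_point ` Vs) \<subseteq> Vs"
    proof
      fix u assume "u \<in> \<Union> (proj_point ` Vs)"
      then obtain v where v: "v \<in> Vs" "u \<in> proj_point v" by auto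
      then obtain c where "c \<noteq> 0" "u = scale3 c v" by (auto simp: mem_proj_point)
      then show "u \<in> Vs" using v by (auto simp: Vs_def hv_scale scale3_eq0)
    qed
    show "Vs \<subseteq> \<Union> (proj_point ` Vs)" using self_proj_point by blast
  qed
  have disj: "pairwise disjnt (proj_point ` Vs)"
  proof (rule pairwiseI)
    fix P Q assume PQ: "P \<in> proj_point ` Vs" "Q \<in> proj_point ` Vs" "P \<noteq> Q"
    then obtain v w where v: "v \<in> Vs" "P = proj_point v" and w: "w \<in> Vs" "Q = proj_point w" by blast
    show "disjnt P Q"
    proof (rule ccontr)
      assume "\<not> disjnt P Q"
      then obtain u where u: "u \<in> proj_point v" "u \<in> proj_point w" using v w unfolding disjnt_def by blast
      obtain c where c: "c \<noteq> 0" "u = scale3 c v" using u(1) unfolding mem_proj_point by blast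
      obtain d where d: "d \<noteq> 0" "u = scale3 d w" using u(2) unfolding mem_proj_point by blast
      have "proj_point v = proj_point u" using c proj_point_scale[of c v] by simp
      also have "\<dots> = proj_point w" using d proj_point_scale[of d w] by simp
      finally have "proj_point v = proj_point w" .
      then show False using PQ v w by simp
    qed
  qed
  have "card Vs = sum card (proj_point ` Vs)"
    using card_Union_disjoint[OF disj] UV by simp
  also have "\<dots> = (\<Sum>P\<in>proj_point ` Vs. q^2 - 1)"
  proof (rule sum.cong)
    fix P assume "P \<in> proj_point ` Vs"
    then obtain v where "v \<in> Vs" "P = proj_point v" by blast
    then show "card P = q^2 - 1" using card_proj_point[of v] by (simp add: Vs_def)
  qed simp
  finally have e1: "card Vs = card (hermitian_unital q :: 'a vec3 set set) * (q^2 - 1)" using U by simp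
  have "{v :: 'a vec3. hv v = 0} = insert (0,0,0) Vs" by (auto simp: Vs_def hv_simp)
  moreover have "(0,0,0) \<notin> Vs" by (simp add: Vs_def)
  ultimately have "card {v :: 'a vec3. hv v = 0} = Suc (card Vs)" by simp
  then have cV: "int (card Vs) = int q ^ 5 - int q ^ 3 + int q ^ 2 - 1" using card_T by simp
  have q21: "int (q^2 - 1) = int q ^ 2 - 1" using q2 by (simp add: of_nat_diff)
  have "int (card (hermitian_unital q :: 'a vec3 set set)) * (int q ^ 2 - 1) = int (card Vs)"
    using e1 q21 by simp
  also have "\<dots> = (int q ^ 3 + 1) * (int q ^ 2 - 1)" unfolding cV by (simp add: algebra_simps power_numeral_reduce)
  finally have e2: "int (card (hermitian_unital q :: 'a vec3 set set)) * (int q ^ 2 - 1) = (int q ^ 3 + 1) * (int q ^ 2 - 1)" .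
  have "int q ^ 2 \<ge> 4" using q2 by (metis of_nat_le_iff of_nat_numeral power2_nat_le_eq_le one_le_numeral power2_eq_square of_nat_power numeral_times_numeral semiring_norm(12) semiring_norm(13) num_double mult_le_mono)
  then have "int q ^ 2 - 1 \<noteq> 0" by linarith
  then have "int (card (hermitian_unital q :: 'a vec3 set set)) = int q ^ 3 + 1" using e2 by simp
  also have "\<dots> = int (q^3 + 1)" by simp
  finally show ?thesis by (simp only: of_nat_eq_iff)
qed

end



context hq
begin

lemma onan_vec:
  assumes ha: "hv a = 0" "hv b = 0" "hv c = 0"
    and D: "dot3 (cross b c) a \<noteq> 0"
    and hd: "hv (add3 b (scale3 s c)) = 0" and he: "hv (add3 c (scale3 t a)) = 0"
    and hf: "hv (add3 a (scale3 u b)) = 0"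
    and col: "dot3 (cross (add3 c (scale3 t a)) (add3 a (scale3 u b))) (add3 b (scale3 s c)) = 0"
  shows False
proof -
  have "(1 + s * t * u) * dot3 (cross b c) a = 0" using col det_param[of c t a u b s] by simp
  then have stu: "s * t * u = -1" using D by (simp add: add_eq_0_iff)
  have sstu: "sig s * sig t * sig u = -1"
    using arg_cong[OF stu, of sig] by (simp add: sig_mult sig_minus)
  define \<alpha> where "\<alpha> = herm b c"
  define \<beta> where "\<beta> = herm c a"
  define \<gamma> where "\<gamma> = herm a b"
  have e1: "sig s * \<alpha> + s * sig \<alpha> = 0"
    using hd hv_line[of b s c] ha herm_swap[of c b] by (simp add: \<alpha>_def)
  have e2: "sig t * \<beta> + t * sig \<beta> = 0"
    using he hv_line[of c t a] ha herm_swap[of a c] by (simp add: \<beta>_def)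
  have e3: "sig u * \<gamma> + u * sig \<gamma> = 0"
    using hf hv_line[of a u b] ha herm_swap[of b a] by (simp add: \<gamma>_def)
  have key: "\<alpha> * \<beta> * \<gamma> + sig \<alpha> * sig \<beta> * sig \<gamma> = 0"
    using e1 e2 e3 stu sstu by algebra
  define Dt where "Dt = dot3 (cross b c) a"
  have "Dt * sig Dt = dot3 (cross b c) a * dot3 (cross (sv b) (sv c)) (sv a)"
    by (simp add: Dt_def sig_det)
  also have "\<dots> = \<alpha> * \<beta> * \<gamma> + sig \<alpha> * sig \<beta> * sig \<gamma>"
  proof -
    have h: "dot3 a (sv a) = 0" "dot3 b (sv b) = 0" "dot3 c (sv c) = 0"
      "dot3 a (sv b) = \<gamma>" "dot3 a (sv c) = sig \<beta>" "dot3 b (sv a) = sig \<gamma>"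
      "dot3 b (sv c) = \<alpha>" "dot3 c (sv a) = \<beta>" "dot3 c (sv b) = sig \<alpha>"
      using ha herm_swap[of a c] herm_swap[of b a] herm_swap[of c b]
      by (simp_all add: \<alpha>_def \<beta>_def \<gamma>_def herm_def[symmetric] hv_def[symmetric])
    show ?thesis unfolding cauchy_binet_vec h by (simp add: algebra_simps)
  qed
  finally have "Dt * sig Dt = 0" using key by simp
  moreover have "Dt \<noteq> 0" using D by (simp add: Dt_def)
  ultimately show False by simp
qed

lemma line_of_two:
  assumes "l \<in> PG_lines" "a \<noteq> (0,0,0)" "b \<noteq> (0,0,0)" "proj_point a \<noteq> proj_point b"
    "proj_point a \<in> l" "proj_point b \<in> l"
  shows "cross a b \<noteq> (0,0,0)" "l = proj_line (cross a b)"
proof -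
  show ab: "cross a b \<noteq> (0,0,0)" using proj_point_eq_iff assms(2-4) by blast
  obtain w where w: "w \<noteq> (0,0,0)" "l = proj_line w" using assms(1) by (rule PG_lines_elem)
  have "dot3 w a = 0" using assms(5) w(2) mem_proj_line_iff[OF assms(2)] by simp
  moreover have "dot3 w b = 0" using assms(6) w(2) mem_proj_line_iff[OF assms(3)] by simp
  ultimately
  show "l = proj_line (cross a b)" using line_unique[OF ab w(1)] w(2) by simp
qed

lemma secants_PG: "l \<in> secants q \<Longrightarrow> l \<in> PG_lines" by (simp add: secants_def)

lemma two_ex:
  assumes "x \<in> hermitian_unital q" "y \<in> hermitian_unital q" "x \<noteq> y"
  shows "\<exists>!l. l \<in> (secants q :: 'a vec3 set set set) \<and> x \<in> l \<and> y \<in> l"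
proof -
  obtain a where a: "a \<noteq> (0,0,0)" "hv a = 0" "x = proj_point a" using assms(1) by (rule unital_elem)
  obtain b where b: "b \<noteq> (0,0,0)" "hv b = 0" "y = proj_point b" using assms(2) by (rule unital_elem)
  have ab: "cross a b \<noteq> (0,0,0)" using proj_point_eq_iff a b assms(3) by blast
  define l0 where "l0 = proj_line (cross a b)"
  have "l0 \<in> PG_lines" unfolding PG_lines_def l0_def using ab by blast
  moreover have "card (l0 \<inter> hermitian_unital q) = q + 1" using secant_card[OF a(1,2) b(1,2) ab] by (simp add: l0_def)
  ultimately have l0s: "l0 \<in> secants q" by (simp add: secants_def)
  have xl: "x \<in> l0" "y \<in> l0" using a b by (simp_all add: l0_def mem_proj_line_iff dot_cross_a dot_cross_b)
  show ?thesis
  proof (rule ex1I[of _ l0])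
    show "l0 \<in> secants q \<and> x \<in> l0 \<and> y \<in> l0" using l0s xl by simp
    fix m assume m: "m \<in> secants q \<and> x \<in> m \<and> y \<in> m"
    then have mP: "m \<in> PG_lines" using secants_PG by blast
    have ne: "proj_point a \<noteq> proj_point b" using a b assms(3) by simp
    show "m = l0" using line_of_two(2)[OF mP a(1) b(1) ne] m a(3) b(3) by (simp add: l0_def)
  qed
qed

lemma onan_set:
  fixes l1 l2 l3 l4 :: "'a vec3 set set"
  assumes L: "l1 \<in> secants q" "l2 \<in> secants q" "l3 \<in> secants q" "l4 \<in> secants q"
    and i12: "\<exists>p\<in>hermitian_unital q. p \<in> l1 \<and> p \<in> l2"
    and i13: "\<exists>p\<in>hermitian_unital q. p \<in> l1 \<and> p \<in> l3"
    and i14: "\<exists>p\<in>hermitian_unital q. p \<in> l1 \<and> p \<in> l4"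
    and i23: "\<exists>p\<in>hermitian_unital q. p \<in> l2 \<and> p \<in> l3"
    and i24: "\<exists>p\<in>hermitian_unital q. p \<in> l2 \<and> p \<in> l4"
    and i34: "\<exists>p\<in>hermitian_unital q. p \<in> l3 \<and> p \<in> l4"
    and nc: "\<not> (\<exists>p\<in>hermitian_unital q. (p \<in> l1 \<and> p \<in> l2 \<and> p \<in> l3) \<or> (p \<in> l1 \<and> p \<in> l2 \<and> p \<in> l4) \<or>
               (p \<in> l1 \<and> p \<in> l3 \<and> p \<in> l4) \<or> (p \<in> l2 \<and> p \<in> l3 \<and> p \<in> l4))"
  shows False
proof -
  obtain PC where PC: "PC \<in> hermitian_unital q" "PC \<in> l1" "PC \<in> l2" using i12 by blast
  obtain PB where PB: "PB \<in> hermitian_unital q" "PB \<in> l1" "PB \<in> l3" using i13 by blast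
  obtain PD where PD: "PD \<in> hermitian_unital q" "PD \<in> l1" "PD \<in> l4" using i14 by blast
  obtain PA where PA: "PA \<in> hermitian_unital q" "PA \<in> l2" "PA \<in> l3" using i23 by blast
  obtain PE where PE: "PE \<in> hermitian_unital q" "PE \<in> l2" "PE \<in> l4" using i24 by blast
  obtain PF where PF: "PF \<in> hermitian_unital q" "PF \<in> l3" "PF \<in> l4" using i34 by blast
  obtain av where av: "av \<noteq> (0,0,0)" "hv av = 0" "PA = proj_point av" using PA(1) by (rule unital_elem)
  obtain bv where bv: "bv \<noteq> (0,0,0)" "hv bv = 0" "PB = proj_point bv" using PB(1) by (rule unital_elem)
  obtain cv where cv: "cv \<noteq> (0,0,0)" "hv cv = 0" "PC = proj_point cv" using PC(1) by (rule unital_elem)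
  obtain dv where dv: "dv \<noteq> (0,0,0)" "hv dv = 0" "PD = proj_point dv" using PD(1) by (rule unital_elem)
  obtain ev where ev: "ev \<noteq> (0,0,0)" "hv ev = 0" "PE = proj_point ev" using PE(1) by (rule unital_elem)
  obtain fv where fv: "fv \<noteq> (0,0,0)" "hv fv = 0" "PF = proj_point fv" using PF(1) by (rule unital_elem)
  have BC: "PB \<noteq> PC" using nc PB PC by blast
  have CA: "PC \<noteq> PA" using nc PA PC by blast
  have AB: "PA \<noteq> PB" using nc PA PB by blast
  have DC: "PD \<noteq> PC" using nc PD PC by blast
  have EA: "PE \<noteq> PA" using nc PE PA by blast
  have FB: "PF \<noteq> PB" using nc PF PB by blast
  have Al1: "PA \<notin> l1" using nc PA by blast
  note P = secants_PG[OF L(1)] secants_PG[OF L(2)] secants_PG[OF L(3)] secants_PG[OF L(4)]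
  have l1: "cross bv cv \<noteq> (0,0,0)" "l1 = proj_line (cross bv cv)"
    using line_of_two[OF P(1) bv(1) cv(1)] BC PB PC bv cv by auto
  have l2: "cross cv av \<noteq> (0,0,0)" "l2 = proj_line (cross cv av)"
    using line_of_two[OF P(2) cv(1) av(1)] CA PA PC av cv by auto
  have l3: "cross av bv \<noteq> (0,0,0)" "l3 = proj_line (cross av bv)"
    using line_of_two[OF P(3) av(1) bv(1)] AB PA PB av bv by auto
  have Dt: "dot3 (cross bv cv) av \<noteq> 0" using Al1 l1(2) av(3) mem_proj_line_iff[OF av(1)] by simp
  have d1: "dot3 (cross bv cv) dv = 0" using PD(2) l1(2) dv(3) mem_proj_line_iff[OF dv(1)] by simp
  have dc: "proj_point dv \<noteq> proj_point cv" using DC dv(3) cv(3) by simp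
  obtain s where s: "add3 bv (scale3 s cv) \<noteq> (0,0,0)" "proj_point dv = proj_point (add3 bv (scale3 s cv))"
      "hv dv = 0 \<Longrightarrow> hv (add3 bv (scale3 s cv)) = 0"
    using param_point[OF l1(1) dv(1) d1 dc] by blast
  have e1: "dot3 (cross cv av) ev = 0" using PE(2) l2(2) ev(3) mem_proj_line_iff[OF ev(1)] by simp
  have ea: "proj_point ev \<noteq> proj_point av" using EA ev(3) av(3) by simp
  obtain t where t: "add3 cv (scale3 t av) \<noteq> (0,0,0)" "proj_point ev = proj_point (add3 cv (scale3 t av))"
      "hv ev = 0 \<Longrightarrow> hv (add3 cv (scale3 t av)) = 0"
    using param_point[OF l2(1) ev(1) e1 ea] by blast
  have f1: "dot3 (cross av bv) fv = 0" using PF(2) l3(2) fv(3) mem_proj_line_iff[OF fv(1)] by simp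
  have fb: "proj_point fv \<noteq> proj_point bv" using FB fv(3) bv(3) by simp
  obtain u where u: "add3 av (scale3 u bv) \<noteq> (0,0,0)" "proj_point fv = proj_point (add3 av (scale3 u bv))"
      "hv fv = 0 \<Longrightarrow> hv (add3 av (scale3 u bv)) = 0"
    using param_point[OF l3(1) fv(1) f1 fb] by blast
  obtain w where w: "w \<noteq> (0,0,0)" "l4 = proj_line w" using P(4) by (rule PG_lines_elem)
  have "dot3 w (add3 bv (scale3 s cv)) = 0" using PD(3) dv(3) s(2) w(2) mem_proj_line_iff[OF s(1)] by simp
  moreover have "dot3 w (add3 cv (scale3 t av)) = 0" using PE(3) ev(3) t(2) w(2) mem_proj_line_iff[OF t(1)] by simp
  moreover have "dot3 w (add3 av (scale3 u bv)) = 0" using PF(3) fv(3) u(2) w(2) mem_proj_line_iff[OF u(1)] by simp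
  ultimately have col: "dot3 (cross (add3 cv (scale3 t av)) (add3 av (scale3 u bv))) (add3 bv (scale3 s cv)) = 0"
    using det_zero_of_dots w(1) by blast
  show False using onan_vec[OF av(2) bv(2) cv(2) Dt s(3)[OF dv(2)] t(3)[OF ev(2)] u(3)[OF fv(2)] col] .
qed

end



theorem proposition2p2:
  fixes q :: nat
  assumes "\<exists>p k. prime p \<and> k \<ge> 1 \<and> q = p ^ k"
    and "card (UNIV :: 'a::{finite, field} set) = q ^ 2"
  shows
    "card (secants q :: 'a vec3 set set set) = q ^ 4 - q ^ 3 + q ^ 2
     \<and> (\<forall>l \<in> (secants q :: 'a vec3 set set set).
          card {m. H_adj q l m} = (q + 1) * (q ^ 2 - 1))
     \<and> card (clique_family q :: 'a vec3 set set set set) = q ^ 3 + 1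
     \<and> (\<forall>C \<in> (clique_family q :: 'a vec3 set set set set).
          is_maximal_clique q C \<and> card C = q ^ 2)
     \<and> (\<forall>C1 \<in> (clique_family q :: 'a vec3 set set set set). \<forall>C2 \<in> clique_family q.
          C1 \<noteq> C2 \<longrightarrow> card (C1 \<inter> C2) = 1)
     \<and> (\<forall>v \<in> (secants q :: 'a vec3 set set set).
          card {C \<in> clique_family q. v \<in> C} = q + 1)
     \<and> (\<forall>u v :: 'a vec3 set set. H_adj q u v \<longrightarrow>
          card {C \<in> clique_family q. u \<in> C \<and> v \<in> C} = 1)
     \<and> (\<forall>a b c d :: 'a vec3 set set.
          H_adj q a b \<and> H_adj q a c \<and> H_adj q a d \<and> H_adj q b c \<and> H_adj q b d \<and> H_adj q c d
          \<longrightarrow> (\<exists>C \<in> clique_family q. card ({a, b, c, d} \<inter> C) \<ge> 3))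
     \<and> (\<forall>u v :: 'a vec3 set set. H_adj q u v \<longrightarrow> card (common_nbrs q u v) = 2 * q ^ 2 - 2)
     \<and> (\<forall>u \<in> (secants q :: 'a vec3 set set set). \<forall>v \<in> secants q.
          u \<noteq> v \<and> \<not> H_adj q u v \<longrightarrow> card (common_nbrs q u v) = (q + 1) ^ 2)"
proof -
  interpret H: hq q "\<lambda>x::'a. x ^ q"
    by unfold_locales (use assms in auto)
  interpret S: steiner "hermitian_unital q :: 'a vec3 set set" "secants q :: 'a vec3 set set set" q
  proof unfold_locales
    show "finite (hermitian_unital q :: 'a vec3 set set)" by simp
    show "finite (secants q :: 'a vec3 set set set)" by simp
    show "card (hermitian_unital q :: 'a vec3 set set) = q ^ 3 + 1" by (rule H.card_unital)
    show "2 \<le> q" by (rule H.q2)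
    show "card (l \<inter> hermitian_unital q) = q + 1" if "l \<in> secants q" for l :: "'a vec3 set set"
      using that by (simp add: secants_def)
    show "\<exists>!l. l \<in> secants q \<and> x \<in> l \<and> y \<in> l"
      if "x \<in> hermitian_unital q" "y \<in> hermitian_unital q" "x \<noteq> y" for x y :: "'a vec3 set"
      using H.two_ex[OF that] .
    show "\<exists>p\<in>hermitian_unital q. (p \<in> a \<and> p \<in> b \<and> p \<in> c) \<or> (p \<in> a \<and> p \<in> b \<and> p \<in> d) \<or>
               (p \<in> a \<and> p \<in> c \<and> p \<in> d) \<or> (p \<in> b \<and> p \<in> c \<and> p \<in> d)"
      if "a \<in> secants q" "b \<in> secants q" "c \<in> secants q" "d \<in> secants q"
        "(\<exists>p\<in>hermitian_unital q. p \<in> a \<and> p \<in> b)" "(\<exists>p\<in>hermitian_unital q. p \<in> a \<and> p \<in> c)"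
        "(\<exists>p\<in>hermitian_unital q. p \<in> a \<and> p \<in> d)" "(\<exists>p\<in>hermitian_unital q. p \<in> b \<and> p \<in> c)"
        "(\<exists>p\<in>hermitian_unital q. p \<in> b \<and> p \<in> d)" "(\<exists>p\<in>hermitian_unital q. p \<in> c \<and> p \<in> d)"
      for a b c d :: "'a vec3 set set"
      using H.onan_set[OF that] by blast
  qed
  have adj: "H_adj q = S.adj" by (intro ext) (simp add: H_adj_def S.adj_def)
  have clq: "clique_at q = S.pencil" by (intro ext) (simp add: clique_at_def S.pencil_def)
  have fam: "(clique_family q :: 'a vec3 set set set set) = S.fam" by (simp add: clique_family_def S.fam_def clq)
  have cn: "common_nbrs q u v = {w \<in> secants q. S.adj u w \<and> S.adj v w}" for u v :: "'a vec3 set set"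
    by (simp add: common_nbrs_def adj)
  have c4: "is_maximal_clique q C \<and> card C = q ^ 2" if Cin: "C \<in> S.fam" for C
  proof -
    obtain x where x: "x \<in> hermitian_unital q" "C = S.pencil x" using Cin unfolding S.fam_def by blast
    have "is_clique q C" unfolding is_clique_def adj using S.pencil_clique[OF x(1)] x(2) by simp
    moreover have "\<forall>v \<in> secants q - C. \<not> (\<forall>u\<in>C. H_adj q u v)"
      unfolding adj using S.pencil_max[OF x(1)] x(2) by blast
    ultimately show ?thesis using S.card_pencil[OF x(1)] x(2) by (simp add: is_maximal_clique_def)
  qed
  have c5: "card (C1 \<inter> C2) = 1" if Cs: "C1 \<in> S.fam" "C2 \<in> S.fam" "C1 \<noteq> C2" for C1 C2
  proof -
    obtain x where x: "x \<in> hermitian_unital q" "C1 = S.pencil x" using Cs(1) unfolding S.fam_def by blast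
    obtain y where y: "y \<in> hermitian_unital q" "C2 = S.pencil y" using Cs(2) unfolding S.fam_def by blast
    have "x \<noteq> y" using Cs(3) x y by auto
    then show ?thesis using S.pencil_inter[OF x(1) y(1)] x y by simp
  qed
  show ?thesis
    unfolding fam cn adj
    using S.card_B S.card_nbrs S.card_fam c4 c5 S.fam_cont S.edge_unique S.K4 S.common_adj S.common_nonadj
    by auto
qed


end
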